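(* Let $(x_n)_{n\ge 1}$ be a sequence of positive real numbers with $\sum_{n=1}^{\infty} x_n<\infty$. For $m\in\mathbb{N}$ let $$E_m(x)=\left\{\sum_{i=1}^{\infty}\epsilon_i x_i \;:\; \epsilon_i\in\{0,1,2,\ldots,m\}\text{ for all } i\in\mathbb{N}\right\}.$$ Then for every $m\in\mathbb{N}$, $E_m(x)$ is homeomorphic to one of the following: (1) a Cantor set; (2) a finite union of intervals; (3) a Cantorval.
   Context: Let $K\subset\mathbb{R}$ be compact. A gap of $K$ is a bounded connected component of $\mathbb{R}\setminus K$; an interval of $K$ is a non-trivial (non-degenerate) connected component of $K$. A perfect subset of $\mathbb{R}$ in which every gap is accumulated on each side by infinitely many intervals and gaps of the set is called an M-Cantorval. A perfect subset of $\mathbb{R}$ in which every gap has an interval adjacent to it on its right and is accumulated on its left by infinitely many intervals and gaps is called an L-Cantorval; an R-Cantorval is defined analogously with left and right interchanged. A Cantorval is an M-, L- or R-Cantorval. A Cantor set means a set homeomorphic to the standard middle-thirds Cantor set. *)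

theory Defs
  imports "HOL-Analysis.Analysis"
begin

fun cantor_stage :: "nat \<Rightarrow> real set" where
  "cantor_stage 0 = {0..1}"
| "cantor_stage (Suc n) = ((\<lambda>t. t / 3) ` cantor_stage n) \<union> ((\<lambda>t. 2/3 + t / 3) ` cantor_stage n)"

definition middle_thirds_cantor :: "real set" where
  "middle_thirds_cantor = (\<Inter>n. cantor_stage n)"

definition is_cantor_set :: "real set \<Rightarrow> bool" where
  "is_cantor_set S \<longleftrightarrow> S homeomorphic middle_thirds_cantor"

definition is_gap :: "real set \<Rightarrow> real set \<Rightarrow> bool" where
  "is_gap K G \<longleftrightarrow> (\<exists>x. x \<notin> K \<and> G = connected_component_set (- K) x) \<and> bounded G"

definition is_interval_of :: "real set \<Rightarrow> real set \<Rightarrow> bool" where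
  "is_interval_of K I \<longleftrightarrow> (\<exists>x\<in>K. I = connected_component_set K x) \<and> (\<exists>a b. a \<in> I \<and> b \<in> I \<and> a \<noteq> b)"

definition perfect_set :: "real set \<Rightarrow> bool" where
  "perfect_set K \<longleftrightarrow> closed K \<and> (\<forall>x\<in>K. x islimpt K)"

text \<open>The point a is accumulated on its left (resp. right) by infinitely many
  intervals and gaps of K: arbitrarily close to a on that side there are intervals and gaps.\<close>
definition acc_left :: "real set \<Rightarrow> real \<Rightarrow> bool" where
  "acc_left K a \<longleftrightarrow> (\<forall>e>0. (\<exists>I. is_interval_of K I \<and> I \<subseteq> {a - e<..<a})
                          \<and> (\<exists>G. is_gap K G \<and> G \<subseteq> {a - e<..<a}))"

definition acc_right :: "real set \<Rightarrow> real \<Rightarrow> bool" where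
  "acc_right K b \<longleftrightarrow> (\<forall>e>0. (\<exists>I. is_interval_of K I \<and> I \<subseteq> {b<..<b + e})
                          \<and> (\<exists>G. is_gap K G \<and> G \<subseteq> {b<..<b + e}))"

text \<open>For a gap G = (Inf G, Sup G): accumulated on its left side means at Inf G from the left,
  on its right side means at Sup G from the right.\<close>
definition is_M_cantorval :: "real set \<Rightarrow> bool" where
  "is_M_cantorval K \<longleftrightarrow> compact K \<and> perfect_set K \<and>
     (\<forall>G. is_gap K G \<longrightarrow> acc_left K (Inf G) \<and> acc_right K (Sup G))"

definition is_L_cantorval :: "real set \<Rightarrow> bool" where
  "is_L_cantorval K \<longleftrightarrow> compact K \<and> perfect_set K \<and>
     (\<forall>G. is_gap K G \<longrightarrow> (\<exists>I. is_interval_of K I \<and> Inf I = Sup G) \<and> acc_left K (Inf G))"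

definition is_R_cantorval :: "real set \<Rightarrow> bool" where
  "is_R_cantorval K \<longleftrightarrow> compact K \<and> perfect_set K \<and>
     (\<forall>G. is_gap K G \<longrightarrow> (\<exists>I. is_interval_of K I \<and> Sup I = Inf G) \<and> acc_right K (Sup G))"

definition is_cantorval :: "real set \<Rightarrow> bool" where
  "is_cantorval K \<longleftrightarrow> is_M_cantorval K \<or> is_L_cantorval K \<or> is_R_cantorval K"

definition is_finite_union_of_intervals :: "real set \<Rightarrow> bool" where
  "is_finite_union_of_intervals S \<longleftrightarrow>
     (\<exists>n::nat. \<exists>a b :: nat \<Rightarrow> real. n \<ge> 1 \<and> (\<forall>i<n. a i < b i) \<and> S = (\<Union>i<n. {a i..b i}))"

definition achievement_set :: "nat \<Rightarrow> (nat \<Rightarrow> real) \<Rightarrow> real set" where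
  "achievement_set m x = {(\<Sum>i. real (e i) * x i) | e :: nat \<Rightarrow> nat. \<forall>i. e i \<le> m}"

end

theory Submission
  imports Defs
begin

definition val :: "(nat \<Rightarrow> real) \<Rightarrow> (nat \<Rightarrow> nat) \<Rightarrow> real" where
  "val x e = (\<Sum>i. real (e i) * x i)"

lemma ach_mem: "y \<in> achievement_set m x \<longleftrightarrow> (\<exists>e. (\<forall>i. e i \<le> m) \<and> y = val x e)"
  unfolding achievement_set_def val_def by auto

lemma summable_dig:
  assumes nn: "\<And>i. x i \<ge> 0" and sx: "summable x" and b: "\<And>i. e i \<le> m"
  shows "summable (\<lambda>i. real (e i) * x i)"
proof (rule summable_comparison_test)
  show "\<exists>N. \<forall>n\<ge>N. norm (real (e n) * x n) \<le> real m * x n"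
    using nn b by (auto intro!: mult_right_mono)
  show "summable (\<lambda>n. real m * x n)" using sx by (rule summable_mult)
qed

lemma val_nonneg:
  assumes nn: "\<And>i. x i \<ge> 0" and sx: "summable x" and b: "\<And>i. e i \<le> m"
  shows "0 \<le> val x e"
  unfolding val_def using summable_dig[OF nn sx b] nn
  by (intro suminf_nonneg) auto

lemma val_le:
  assumes nn: "\<And>i. x i \<ge> 0" and sx: "summable x" and b: "\<And>i. e i \<le> m"
  shows "val x e \<le> real m * suminf x"
proof -
  have "val x e \<le> (\<Sum>i. real m * x i)"
    unfolding val_def using summable_dig[OF nn sx b] nn b sx
    by (intro suminf_le) (auto intro!: mult_right_mono summable_mult)
  also have "\<dots> = real m * suminf x" using sx by (rule suminf_mult)
  finally show ?thesis .
qed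

lemma val_upd:
  assumes nn: "\<And>i. x i \<ge> 0" and sx: "summable x" and b: "\<And>i. e i \<le> m"
  shows "val x (e(n := c)) = val x e + (real c - real (e n)) * x n"
proof -
  have eq: "(\<lambda>i. real ((e(n := c)) i) * x i) = (\<lambda>i. real (e i) * x i + (if i = n then (real c - real (e n)) * x n else 0))"
    by (auto simp: fun_eq_iff algebra_simps)
  have s2: "(\<lambda>i. if i = n then (real c - real (e n)) * x n else 0) sums ((real c - real (e n)) * x n)"
    using sums_single[of n "\<lambda>_. (real c - real (e n)) * x n"] by simp
  have "val x (e(n := c)) = (\<Sum>i. real (e i) * x i) + (real c - real (e n)) * x n"
    unfolding val_def eq
    using suminf_add[OF summable_dig[OF nn sx b] sums_summable[OF s2]] sums_unique[OF s2] by simp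
  then show ?thesis unfolding val_def by simp
qed

lemma abs_suminf_tail:
  fixes x f :: "nat \<Rightarrow> real"
  assumes nn: "\<And>i. x i \<ge> 0" and sx: "summable x" and c: "c \<ge> 0"
    and z: "\<And>i. i < n \<Longrightarrow> f i = 0" and bd: "\<And>i. \<bar>f i\<bar> \<le> c * x i"
  shows "\<bar>suminf f\<bar> \<le> c * (\<Sum>i. x (i + n))"
proof -
  have sxn: "summable (\<lambda>i. x (i + n))" using summable_ignore_initial_segment[OF sx] by simp
  have sf: "summable (\<lambda>i. \<bar>f i\<bar>)"
    by (rule summable_comparison_test[of _ "\<lambda>i. c * x i"]) (use bd sx in \<open>auto intro: summable_mult\<close>)
  then have sf': "summable f" by (rule summable_rabs_cancel)
  have "suminf f = (\<Sum>i. f (i + n)) + sum f {..<n}" by (rule suminf_split_initial_segment[OF sf'])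
  also have "sum f {..<n} = 0" using z by simp
  finally have e1: "suminf f = (\<Sum>i. f (i + n))" by simp
  have sfn: "summable (\<lambda>i. \<bar>f (i + n)\<bar>)" using summable_ignore_initial_segment[OF sf] by simp
  have "\<bar>\<Sum>i. f (i + n)\<bar> \<le> (\<Sum>i. \<bar>f (i + n)\<bar>)" by (rule summable_rabs[OF sfn])
  also have "\<dots> \<le> (\<Sum>i. c * x (i + n))" by (rule suminf_le) (use bd sfn sxn in \<open>auto intro: summable_mult\<close>)
  also have "\<dots> = c * (\<Sum>i. x (i + n))" by (rule suminf_mult[OF sxn])
  finally show ?thesis using e1 by simp
qed

lemma ach_closed:
  assumes nn: "\<And>i. x i \<ge> 0" and sx: "summable x"
  shows "closed (achievement_set m x)"
  unfolding closed_sequential_limits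
proof safe
  fix y l assume yE: "\<forall>n. y n \<in> achievement_set m x" and lim: "y \<longlonglongrightarrow> l"
  have "\<forall>k. \<exists>ek. (\<forall>i. ek i \<le> m) \<and> y k = val x ek" using yE by (auto simp: ach_mem)
  then obtain e where e: "\<And>k. (\<forall>i. e k i \<le> m) \<and> y k = val x (e k)" by metis
  define N where "N = rec_nat (UNIV::nat set) (\<lambda>i S. {k\<in>S. e k i = (SOME v. v \<le> m \<and> infinite {k\<in>S. e k i = v})})"
  have N0: "N 0 = UNIV" and NS: "\<And>i. N (Suc i) = {k\<in>N i. e k i = (SOME v. v \<le> m \<and> infinite {k\<in>N i. e k i = v})}"
    unfolding N_def by simp_all
  define d where "d i = (SOME v. v \<le> m \<and> infinite {k\<in>N i. e k i = v})" for i
  have ex: "\<exists>v. v \<le> m \<and> infinite {k\<in>S. e k i = v}" if inf: "infinite S" for S i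
  proof (rule ccontr)
    assume "\<not> ?thesis"
    then have "finite (\<Union>v\<in>{..m}. {k\<in>S. e k i = v})" by auto
    moreover have "S = (\<Union>v\<in>{..m}. {k\<in>S. e k i = v})" using e by auto
    ultimately show False using inf by simp
  qed
  have infN: "infinite (N i) \<and> d i \<le> m" for i
  proof (induction i)
    case 0
    then show ?case using someI_ex[OF ex[of "N 0" 0]] by (auto simp: N0 d_def)
  next
    case (Suc i)
    have "infinite (N (Suc i))" using someI_ex[OF ex[of "N i" i]] Suc by (simp add: NS)
    then show ?case using someI_ex[OF ex[of "N (Suc i)" "Suc i"]] by (simp add: d_def)
  qed
  have NS': "N (Suc i) = {k\<in>N i. e k i = d i}" for i using NS d_def by simp
  have mono: "N j \<subseteq> N i" if "i \<le> j" for i j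
    using that by (induction j) (auto simp: NS' le_Suc_eq)
  have agree: "e k i = d i" if "k \<in> N n" "i < n" for k n i
    using mono[of "Suc i" n] that by (auto simp: NS')
  have dm: "\<And>i. d i \<le> m" using infN by simp
  have "dist l (val x d) \<le> \<epsilon>" if ep: "\<epsilon> > 0" for \<epsilon>
  proof -
    have "(\<lambda>n. \<Sum>i. x (i + n)) \<longlonglongrightarrow> 0" by (rule suminf_exist_split2[OF sx])
    then have "\<forall>\<^sub>F n in sequentially. real m * (\<Sum>i. x (i + n)) < \<epsilon>/2"
    proof -
      assume t: "(\<lambda>n. \<Sum>i. x (i + n)) \<longlonglongrightarrow> 0"
      have "(\<lambda>n. real m * (\<Sum>i. x (i + n))) \<longlonglongrightarrow> real m * 0" by (intro tendsto_mult tendsto_const t)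
      from order_tendstoD(2)[OF this, of "\<epsilon>/2"] show ?thesis using ep by simp
    qed
    then obtain n where n: "real m * (\<Sum>i. x (i + n)) < \<epsilon>/2" by (auto simp: eventually_sequentially)
    from lim ep obtain K0 where K0: "\<And>k. k \<ge> K0 \<Longrightarrow> dist (y k) l < \<epsilon>/2"
      unfolding lim_sequentially by (meson half_gt_zero)
    obtain k where k: "k \<ge> K0" "k \<in> N n" using infN[of n] unfolding infinite_nat_iff_unbounded_le by blast
    have "\<bar>(\<Sum>i. (real (e k i) - real (d i)) * x i)\<bar> \<le> real m * (\<Sum>i. x (i + n))"
      apply (rule abs_suminf_tail[OF nn sx])
        apply simp
      using agree[OF k(2)] apply simp
    proof -
      fix i
      have "e k i \<le> m" "d i \<le> m" using e[of k] dm by auto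
      then have "\<bar>real (e k i) - real (d i)\<bar> \<le> real m" by (simp add: abs_le_iff)
      then show "\<bar>(real (e k i) - real (d i)) * x i\<bar> \<le> real m * x i"
        using nn[of i] by (simp add: abs_mult mult_right_mono)
    qed
    moreover have "(\<Sum>i. (real (e k i) - real (d i)) * x i) = val x (e k) - val x d"
    proof -
      have s1: "summable (\<lambda>i. real (e k i) * x i)" using summable_dig[OF nn sx, of "e k" m] e[of k] by blast
      have s2: "summable (\<lambda>i. real (d i) * x i)" using summable_dig[OF nn sx, of d m] dm by blast
      show ?thesis unfolding val_def using suminf_diff[OF s1 s2] by (simp add: algebra_simps)
    qed
    ultimately have "dist (y k) (val x d) < \<epsilon>/2" using e[of k] n by (simp add: dist_real_def)
    then show ?thesis using K0[OF k(1)] by (simp add: dist_commute) (smt (verit) dist_triangle)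
  qed
  then have "l = val x d"
    by (metis dist_le_zero_iff field_lbound_gt_zero linorder_not_le zero_less_dist_iff order_less_irrefl)
  then show "l \<in> achievement_set m x" using dm by (auto simp: ach_mem)
qed

lemma ach_bounded:
  assumes nn: "\<And>i. x i \<ge> 0" and sx: "summable x"
  shows "achievement_set m x \<subseteq> {0..real m * suminf x}"
proof
  fix y assume "y \<in> achievement_set m x"
  then obtain e where b: "\<And>i. e i \<le> m" and y: "y = val x e" by (auto simp: ach_mem)
  show "y \<in> {0..real m * suminf x}" using val_nonneg[OF nn sx b] val_le[OF nn sx b] y by simp
qed

lemma ach_compact:
  assumes nn: "\<And>i. x i \<ge> 0" and sx: "summable x"
  shows "compact (achievement_set m x)"
  using ach_closed[OF nn sx] ach_bounded[OF nn sx]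
  by (meson bounded_closed_interval bounded_subset compact_eq_bounded_closed)

lemma ach_nonempty: "val x (\<lambda>_. 0) \<in> achievement_set m x"
  by (auto simp: ach_mem)

lemma ach_perfect:
  assumes pos: "\<And>i. x i > 0" and sx: "summable x" and m1: "m \<ge> 1"
  shows "perfect_set (achievement_set m x)"
  unfolding perfect_set_def
proof (intro conjI ballI)
  have nn: "\<And>i. x i \<ge> 0" using pos less_imp_le by blast
  show "closed (achievement_set m x)" by (rule ach_closed[OF nn sx])
  fix y assume "y \<in> achievement_set m x"
  then obtain e where b: "\<And>i. e i \<le> m" and y: "y = val x e" by (auto simp: ach_mem)
  show "y islimpt achievement_set m x"
    unfolding islimpt_approachable
  proof (intro allI impI)
    fix \<epsilon> :: real assume ep: "\<epsilon> > 0"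
    have "x \<longlonglongrightarrow> 0" by (rule summable_LIMSEQ_zero[OF sx])
    then obtain n where n: "x n < \<epsilon>" using ep by (auto simp: lim_sequentially dist_real_def) (metis abs_less_iff order_refl pos less_imp_le)
    define c where "c = (if e n < m then e n + 1 else e n - 1)"
    have cm: "c \<le> m" using b[of n] by (auto simp: c_def)
    have b': "\<And>i. (e(n := c)) i \<le> m" using b cm by auto
    have v: "val x (e(n := c)) = val x e + (real c - real (e n)) * x n" by (rule val_upd[OF nn sx b])
    have "\<bar>real c - real (e n)\<bar> = 1" using b[of n] m1 by (auto simp: c_def)
    then have "\<bar>val x (e(n := c)) - y\<bar> = x n" using v y pos[of n] by (simp add: abs_mult)
    moreover have "val x (e(n := c)) \<in> achievement_set m x" unfolding ach_mem using b' by blast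
    ultimately show "\<exists>x'\<in>achievement_set m x. x' \<noteq> y \<and> dist x' y < \<epsilon>"
      using n pos[of n] by (intro bexI[of _ "val x (e(n := c))"]) (auto simp: ach_mem dist_real_def)
  qed
qed

lemma val_split:
  assumes nn: "\<And>i. x i \<ge> 0" and sx: "summable x" and b: "\<And>i. e i \<le> m" and fS: "finite S"
  shows "val x e = (\<Sum>i\<in>S. real (e i) * x i) + val (\<lambda>i. if i \<in> S then 0 else x i) e"
proof -
  let ?y = "\<lambda>i. if i \<in> S then 0 else x i"
  have nny: "\<And>i. ?y i \<ge> 0" using nn by auto
  have sy: "summable ?y" by (rule summable_comparison_test[of _ x]) (use nn sx in auto)
  have s1: "summable (\<lambda>i. if i \<in> S then real (e i) * x i else 0)"
    by (rule summable_finite[OF fS]) auto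
  have "val x e = (\<Sum>i. (if i \<in> S then real (e i) * x i else 0) + real (e i) * ?y i)"
    unfolding val_def by (rule suminf_cong) auto
  also have "\<dots> = (\<Sum>i. (if i \<in> S then real (e i) * x i else 0)) + (\<Sum>i. real (e i) * ?y i)"
    by (rule suminf_add[OF s1 summable_dig[OF nny sy b], symmetric])
  also have "(\<Sum>i. (if i \<in> S then real (e i) * x i else 0)) = (\<Sum>i\<in>S. real (e i) * x i)"
    by (subst suminf_finite[OF fS]) auto
  finally show ?thesis unfolding val_def .
qed

lemma val_finite:
  assumes fS: "finite S" and z: "\<And>i. i \<notin> S \<Longrightarrow> e i = 0"
  shows "val x e = (\<Sum>i\<in>S. real (e i) * x i)"
  unfolding val_def by (rule suminf_finite[OF fS]) (use z in auto)

lemma interior_finite_Union_empty: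
  assumes "finite \<A>" "\<And>A. A \<in> \<A> \<Longrightarrow> closed A \<and> interior A = {}"
  shows "interior (\<Union>\<A>) = {}"
  using assms
proof (induction \<A> rule: finite_induct)
  case empty then show ?case by simp
next
  case (insert A \<A>)
  have "closed (\<Union>\<A>)" using insert by (intro closed_Union) auto
  then have "interior (\<Union>\<A> \<union> A) = interior (\<Union>\<A>)"
    using insert by (intro interior_closed_Un_empty_interior) auto
  then show ?case using insert by (simp add: Un_commute)
qed

lemma fin_kakeya:
  fixes x :: "nat \<Rightarrow> real"
  assumes "finite A" "\<forall>j\<in>A. x j > 0" "w \<ge> 0"
    "\<forall>k\<in>A. x k \<le> real m * (\<Sum>j\<in>{j\<in>A. x j < x k}. x j) + w" "0 \<le> t" "t \<le> real m * sum x A"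
  shows "\<exists>c. (\<forall>i. c i \<le> m) \<and> (\<Sum>i\<in>A. real (c i) * x i) \<le> t \<and> t - (\<Sum>i\<in>A. real (c i) * x i) \<le> w"
  using assms
proof (induction "card A" arbitrary: A t rule: less_induct)
  case less
  show ?case
  proof (cases "A = {}")
    case True
    then show ?thesis using less.prems by (intro exI[of _ "\<lambda>_. 0"]) auto
  next
    case False
    obtain k where kA: "k \<in> A" and kmax: "\<And>j. j \<in> A \<Longrightarrow> x j \<le> x k"
      using Max_in[of "x ` A"] Max_ge[of "x ` A"] less.prems(1) False
      by (metis (no_types, lifting) empty_is_image finite_imageI image_eqI imageE)
    define A' where "A' = A - {k}"
    have fA': "finite A'" using less.prems(1) by (simp add: A'_def)
    have cA': "card A' < card A" using less.prems(1) kA unfolding A'_def by (rule card_Diff1_less)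
    have xk: "x k > 0" using less.prems(2) kA by auto
    have pos': "\<forall>j\<in>A'. x j > 0" using less.prems(2) by (auto simp: A'_def)
    have sets: "{j\<in>A'. x j < x k'} = {j\<in>A. x j < x k'}" if "k' \<in> A'" for k'
      using that kmax by (auto simp: A'_def) (meson leD)
    have cond': "\<forall>k'\<in>A'. x k' \<le> real m * (\<Sum>j\<in>{j\<in>A'. x j < x k'}. x j) + w"
      using less.prems(4) sets by (auto simp: A'_def)
    have nnA: "\<And>j. j \<in> A \<Longrightarrow> x j \<ge> 0" using less.prems(2) by (auto intro: less_imp_le)
    have "(\<Sum>j\<in>{j\<in>A. x j < x k}. x j) \<le> sum x A'"
      by (rule sum_mono2[OF fA']) (use nnA in \<open>auto simp: A'_def\<close>)
    then have "real m * (\<Sum>j\<in>{j\<in>A. x j < x k}. x j) \<le> real m * sum x A'"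
      by (rule mult_left_mono) simp
    then have xkb: "x k \<le> real m * sum x A' + w"
      using less.prems(4) kA by fastforce
    have sumA: "sum g A = g k + sum g A'" for g :: "nat \<Rightarrow> real"
      using less.prems(1) kA by (simp add: A'_def sum.remove)
    have IH: "\<And>t. 0 \<le> t \<Longrightarrow> t \<le> real m * sum x A' \<Longrightarrow>
       \<exists>c. (\<forall>i. c i \<le> m) \<and> (\<Sum>i\<in>A'. real (c i) * x i) \<le> t \<and> t - (\<Sum>i\<in>A'. real (c i) * x i) \<le> w"
      using less.hyps[OF cA' fA' pos' less.prems(3) cond'] by blast
    have nnA': "sum x A' \<ge> 0" using nnA by (auto simp: A'_def intro: sum_nonneg)
    have step: "\<exists>c. (\<forall>i. c i \<le> m) \<and> (\<Sum>i\<in>A. real (c i) * x i) \<le> t \<and> t - (\<Sum>i\<in>A. real (c i) * x i) \<le> w"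
      if ck: "ck \<le> m" and t1: "real ck * x k \<le> t" and
         good: "\<exists>c. (\<forall>i. c i \<le> m) \<and> (\<Sum>i\<in>A'. real (c i) * x i) \<le> t - real ck * x k \<and> t - real ck * x k - (\<Sum>i\<in>A'. real (c i) * x i) \<le> w"
      for ck
    proof -
      obtain c where c: "\<forall>i. c i \<le> m" "(\<Sum>i\<in>A'. real (c i) * x i) \<le> t - real ck * x k"
          "t - real ck * x k - (\<Sum>i\<in>A'. real (c i) * x i) \<le> w" using good by blast
      have eqs: "(\<Sum>i\<in>A'. real ((c(k := ck)) i) * x i) = (\<Sum>i\<in>A'. real (c i) * x i)"
        by (rule sum.cong) (auto simp: A'_def)
      show ?thesis
        using c ck eqs sumA[of "\<lambda>i. real ((c(k := ck)) i) * x i"]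
        by (intro exI[of _ "c(k := ck)"]) auto
    qed
    show ?thesis
    proof (cases "real m * x k \<le> t")
      case True
      have "t - real m * x k \<le> real m * sum x A'" using less.prems(6) sumA[of x] by (simp add: algebra_simps)
      then show ?thesis using IH[of "t - real m * x k"] True by (intro step[of m]) auto
    next
      case False
      define ck where "ck = nat \<lfloor>t / x k\<rfloor>"
      have fl: "real ck \<le> t / x k" "t / x k < real ck + 1"
        using less.prems(5) xk by (auto simp: ck_def)
      have t1: "real ck * x k \<le> t" using fl(1) xk by (simp add: field_simps)
      have t2: "t < (real ck + 1) * x k" using fl(2) xk by (simp add: field_simps)
      have ckm: "ck \<le> m"
      proof -
        have "t / x k < real m" using False xk by (simp add: field_simps)
        then show ?thesis using fl(1) by linarith
      qed
      show ?thesis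
      proof (cases "t - real ck * x k \<le> real m * sum x A'")
        case True
        then show ?thesis using IH[of "t - real ck * x k"] t1 by (intro step[OF ckm t1]) auto
      next
        case F2: False
        have "(\<Sum>i\<in>A'. real m * x i) = real m * sum x A'" by (simp add: sum_distrib_left)
        moreover have "t - real ck * x k - real m * sum x A' \<le> w" using t2 xkb by (simp add: algebra_simps)
        ultimately show ?thesis using F2
          by (intro step[OF ckm t1] exI[of _ "\<lambda>_. m"]) auto
      qed
    qed
  qed
qed

locale ach =
  fixes x :: "nat \<Rightarrow> real" and m :: nat
  assumes pos: "\<And>i. x i > 0" and sx: "summable x" and m1: "m \<ge> 1"
begin

abbreviation "E \<equiv> achievement_set m x"

lemma nn: "x i \<ge> 0" using pos[of i] by simp

definition xs :: "real \<Rightarrow> nat \<Rightarrow> real" where "xs \<sigma> i = (if x i \<le> \<sigma> then x i else 0)"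
definition T :: "real \<Rightarrow> real set" where "T \<sigma> = achievement_set m (xs \<sigma>)"
definition Rle :: "real \<Rightarrow> real" where "Rle \<sigma> = suminf (xs \<sigma>)"
definition Rlt :: "real \<Rightarrow> real" where "Rlt t = (\<Sum>j. if x j < t then x j else 0)"
definition H :: "real \<Rightarrow> nat set" where "H \<sigma> = {i. \<sigma> < x i}"
definition F :: "real \<Rightarrow> real set" where
  "F \<sigma> = (\<lambda>c. \<Sum>i\<in>H \<sigma>. real (c i) * x i) ` PiE (H \<sigma>) (\<lambda>_. {..m})"

lemma xs_nn: "xs \<sigma> i \<ge> 0" using nn by (simp add: xs_def)
lemma xs_le: "xs \<sigma> i \<le> x i" using nn by (simp add: xs_def)
lemma xs_summable: "summable (xs \<sigma>)"
  by (rule summable_comparison_test[of _ x]) (use xs_nn xs_le sx in auto)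
lemma xs_eq: "xs \<sigma> = (\<lambda>i. if i \<in> H \<sigma> then 0 else x i)"
  by (auto simp: xs_def H_def fun_eq_iff)

lemma Rle_nn: "Rle \<sigma> \<ge> 0" unfolding Rle_def using xs_summable xs_nn by (intro suminf_nonneg) auto

lemma Rlt_summable: "summable (\<lambda>j. if x j < t then x j else 0)"
  by (rule summable_comparison_test[of _ x]) (use nn sx in auto)
lemma Rlt_nn: "Rlt t \<ge> 0" unfolding Rlt_def using Rlt_summable nn by (intro suminf_nonneg) auto

lemma finite_bigger: assumes "\<sigma> > 0" shows "finite {i. \<sigma> \<le> x i}"
proof -
  have "x \<longlonglongrightarrow> 0" by (rule summable_LIMSEQ_zero[OF sx])
  then obtain N where N: "\<And>i. i \<ge> N \<Longrightarrow> \<bar>x i\<bar> < \<sigma>" using assms by (auto simp: lim_sequentially dist_real_def)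
  have "{i. \<sigma> \<le> x i} \<subseteq> {..<N}" using N by (force simp: not_less[symmetric])
  then show ?thesis using finite_subset by blast
qed

lemma finite_H: "\<sigma> > 0 \<Longrightarrow> finite (H \<sigma>)"
  using finite_bigger[of \<sigma>] by (rule finite_subset[rotated]) (auto simp: H_def)

lemma exists_small: assumes "\<sigma> > 0" shows "\<exists>i. x i < \<sigma>"
  using finite_bigger[OF assms] by (metis (mono_tags) infinite_UNIV_nat mem_Collect_eq not_less finite_subset subsetI)

lemma finite_F: "\<sigma> > 0 \<Longrightarrow> finite (F \<sigma>)"
  unfolding F_def by (intro finite_imageI finite_PiE finite_H) auto

lemma decomp: assumes "\<sigma> > 0" shows "E = (\<Union>f\<in>F \<sigma>. (+) f ` T \<sigma>)"
proof (intro equalityI subsetI)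
  fix y assume "y \<in> E"
  then obtain e where b: "\<And>i. e i \<le> m" and y: "y = val x e" by (auto simp: ach_mem)
  have "y = (\<Sum>i\<in>H \<sigma>. real (e i) * x i) + val (xs \<sigma>) e"
    using val_split[OF _ sx b finite_H[OF assms]] nn y by (simp add: xs_eq)
  moreover have "(\<Sum>i\<in>H \<sigma>. real (e i) * x i) \<in> F \<sigma>"
    unfolding F_def using b by (intro image_eqI[of _ _ "restrict e (H \<sigma>)"]) auto
  moreover have "val (xs \<sigma>) e \<in> T \<sigma>" unfolding T_def using b by (auto simp: ach_mem)
  ultimately show "y \<in> (\<Union>f\<in>F \<sigma>. (+) f ` T \<sigma>)" by blast
next
  fix y assume "y \<in> (\<Union>f\<in>F \<sigma>. (+) f ` T \<sigma>)"
  then obtain f t where f: "f \<in> F \<sigma>" and t: "t \<in> T \<sigma>" and yft: "y = f + t" by blast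
  from f obtain c where c: "c \<in> PiE (H \<sigma>) (\<lambda>_. {..m})" and fc: "f = (\<Sum>i\<in>H \<sigma>. real (c i) * x i)"
    unfolding F_def by blast
  from t obtain c' where c': "\<And>i. c' i \<le> m" and tc: "t = val (xs \<sigma>) c'" unfolding T_def ach_mem by blast
  have y: "y = (\<Sum>i\<in>H \<sigma>. real (c i) * x i) + val (xs \<sigma>) c'" using yft fc tc by simp
  define e where "e i = (if i \<in> H \<sigma> then c i else c' i)" for i
  have b: "\<And>i. e i \<le> m" using c c' by (auto simp: e_def)
  have "val x e = (\<Sum>i\<in>H \<sigma>. real (e i) * x i) + val (xs \<sigma>) e"
    using val_split[OF _ sx b finite_H[OF assms]] nn by (simp add: xs_eq)
  also have "(\<Sum>i\<in>H \<sigma>. real (e i) * x i) = (\<Sum>i\<in>H \<sigma>. real (c i) * x i)" by (auto simp: e_def)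
  also have "val (xs \<sigma>) e = val (xs \<sigma>) c'" unfolding val_def by (rule suminf_cong) (auto simp: e_def xs_eq)
  finally show "y \<in> E" unfolding ach_mem using y b by metis
qed

lemma forcing:
  assumes b: "\<And>i. e i \<le> m" and nE: "val x e + x j \<notin> E" shows "e j = m"
proof (rule ccontr)
  assume "e j \<noteq> m"
  then have "e j + 1 \<le> m" using b[of j] by simp
  then have b': "\<And>i. (e(j := e j + 1)) i \<le> m" using b by auto
  have "val x (e(j := e j + 1)) = val x e + x j" using val_upd[OF _ sx b, where n=j and c="e j + 1"] nn by simp
  then show False using nE b' unfolding ach_mem by metis
qed

lemma shift_down:
  assumes b: "\<And>i. e i \<le> m" and em: "\<And>i. x i \<le> \<sigma> \<Longrightarrow> e i = m" and t: "t \<in> T \<sigma>"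
  shows "val x e - t \<in> E"
proof -
  obtain c where c: "\<And>i. c i \<le> m" and tc: "t = val (xs \<sigma>) c" using t by (auto simp: T_def ach_mem)
  define e' where "e' i = (if x i \<le> \<sigma> then m - c i else e i)" for i
  have b': "\<And>i. e' i \<le> m" using b by (auto simp: e'_def)
  have "val x e' = (\<Sum>i. real (e i) * x i - real (c i) * xs \<sigma> i)"
    unfolding val_def by (rule suminf_cong) (use c em in \<open>auto simp: e'_def xs_def of_nat_diff algebra_simps\<close>)
  also have "\<dots> = val x e - t"
    unfolding tc val_def by (rule suminf_diff[OF summable_dig[OF _ sx b] summable_dig[OF xs_nn xs_summable c], symmetric]) (use nn in auto)
  finally show ?thesis unfolding ach_mem using b' by metis
qed

lemma T_closed: "closed (T \<sigma>)" unfolding T_def by (rule ach_closed[OF xs_nn xs_summable])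

lemma T_sub: "T \<sigma> \<subseteq> {0..real m * Rle \<sigma>}" unfolding T_def Rle_def by (rule ach_bounded[OF xs_nn xs_summable])

lemma int_T: assumes "\<sigma> > 0" "interior E \<noteq> {}" shows "interior (T \<sigma>) \<noteq> {}"
proof
  assume iT: "interior (T \<sigma>) = {}"
  have "interior (\<Union>((\<lambda>f. (+) f ` T \<sigma>) ` F \<sigma>)) = {}"
    by (rule interior_finite_Union_empty) (use finite_F[OF assms(1)] T_closed iT in \<open>auto simp: interior_translation closed_translation\<close>)
  then show False using assms decomp by simp
qed

lemma Rle_mono: "\<delta> \<le> \<sigma> \<Longrightarrow> Rle \<delta> \<le> Rle \<sigma>"
  unfolding Rle_def by (rule suminf_le[OF _ xs_summable xs_summable]) (auto simp: xs_def nn)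

lemma Rle_small: assumes ep: "\<epsilon> > 0" and bp: "b > 0" shows "\<exists>\<delta>>0. \<delta> \<le> b \<and> real m * Rle \<delta> < \<epsilon>"
proof -
  have mp: "real m > 0" using m1 by simp
  obtain N where N: "\<And>n. n \<ge> N \<Longrightarrow> norm (\<Sum>i. x (i + n)) < \<epsilon> / real m"
    using suminf_exist_split[OF _ sx, of "\<epsilon> / real m"] ep mp by auto
  define \<delta> where "\<delta> = min b ((if N = 0 then 1 else Min (x ` {..<N})) / 2)"
  have "N > 0 \<Longrightarrow> Min (x ` {..<N}) > 0" by (subst Min_gr_iff) (auto simp: pos)
  then have Mpos: "(if N = 0 then 1 else Min (x ` {..<N})) > 0" by auto
  have dp: "\<delta> > 0" using Mpos bp by (simp add: \<delta>_def)
  have small: "j \<ge> N" if "x j \<le> \<delta>" for j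
  proof (rule ccontr)
    assume "\<not> j \<ge> N"
    then have "j < N" by simp
    then have "Min (x ` {..<N}) \<le> x j" "N \<noteq> 0" by auto
    then show False using that Mpos unfolding \<delta>_def by auto
  qed
  have "\<bar>Rle \<delta>\<bar> \<le> 1 * (\<Sum>i. x (i + N))"
    unfolding Rle_def by (rule abs_suminf_tail[OF nn sx]) (use small in \<open>auto simp: xs_def nn\<close>, force)
  then have "Rle \<delta> < \<epsilon> / real m" using N[of N] by simp
  then have "real m * Rle \<delta> < \<epsilon>" using mp by (simp add: field_simps)
  then show ?thesis using dp by (intro exI[of _ \<delta>]) (auto simp: \<delta>_def)
qed

end

context ach begin

lemma kakeya:
  assumes sp: "s > 0" and C: "\<And>k. x k \<le> s \<Longrightarrow> x k \<le> real m * Rlt (x k)"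
  shows "{0..real m * Rle s} \<subseteq> T s"
proof
  fix t assume t: "t \<in> {0..real m * Rle s}"
  have "t \<in> closure (T s)"
    unfolding closure_approachable
  proof (intro allI impI)
    fix \<epsilon> :: real assume ep: "\<epsilon> > 0"
    obtain \<delta> where dp: "\<delta> > 0" and ds: "\<delta> \<le> s/2" and dsm: "real m * Rle \<delta> < \<epsilon>"
      using Rle_small[OF ep, of "s/2"] sp by auto
    define A where "A = {j. \<delta> < x j \<and> x j \<le> s}"
    have fA: "finite A" using finite_H[OF dp] by (rule finite_subset[rotated]) (auto simp: A_def H_def)
    have sA: "summable (\<lambda>j. if j \<in> A then x j else 0)" by (rule summable_finite[OF fA]) auto
    have RleA: "Rle s = sum x A + Rle \<delta>"
    proof -
      have "Rle s = (\<Sum>j. (if j \<in> A then x j else 0) + xs \<delta> j)"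
        unfolding Rle_def by (rule suminf_cong) (use ds dp in \<open>auto simp: xs_def A_def\<close>)
      also have "\<dots> = (\<Sum>j. (if j \<in> A then x j else 0)) + Rle \<delta>"
        unfolding Rle_def by (rule suminf_add[OF sA xs_summable, symmetric])
      also have "(\<Sum>j. (if j \<in> A then x j else 0)) = sum x A"
        by (subst suminf_finite[OF fA]) auto
      finally show ?thesis .
    qed
    have cond: "\<forall>k\<in>A. x k \<le> real m * (\<Sum>j\<in>{j\<in>A. x j < x k}. x j) + real m * Rle \<delta>"
    proof
      fix k assume kA: "k \<in> A"
      let ?B = "{j\<in>A. x j < x k}"
      have fB: "finite ?B" using fA by simp
      have sB: "summable (\<lambda>j. if j \<in> ?B then x j else 0)" by (rule summable_finite[OF fB]) auto
      have "Rlt (x k) \<le> (\<Sum>j. (if j \<in> ?B then x j else 0) + xs \<delta> j)"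
        unfolding Rlt_def
        by (rule suminf_le[OF _ Rlt_summable summable_add[OF sB xs_summable]])
           (use kA nn in \<open>auto simp: A_def xs_def\<close>)
      also have "\<dots> = (\<Sum>j. (if j \<in> ?B then x j else 0)) + Rle \<delta>"
        unfolding Rle_def by (rule suminf_add[OF sB xs_summable, symmetric])
      also have "(\<Sum>j. (if j \<in> ?B then x j else 0)) = sum x ?B"
        by (subst suminf_finite[OF fB]) auto
      finally have "Rlt (x k) \<le> sum x ?B + Rle \<delta>" .
      then have "real m * Rlt (x k) \<le> real m * sum x ?B + real m * Rle \<delta>"
        by (metis distrib_left mult_left_mono of_nat_0_le_iff)
      moreover have "x k \<le> real m * Rlt (x k)" using C kA by (auto simp: A_def)
      ultimately show "x k \<le> real m * (\<Sum>j\<in>?B. x j) + real m * Rle \<delta>" by simp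
    qed
    have wnn: "real m * Rle \<delta> \<ge> 0" using Rle_nn by simp
    have posA: "\<forall>j\<in>A. x j > 0" using pos by auto
    obtain p where pT: "p \<in> T s" and pt: "p \<le> t" and tp: "t - p \<le> real m * Rle \<delta>"
    proof (cases "t \<le> real m * sum x A")
      case True
      obtain c where c: "\<forall>i. c i \<le> m" "(\<Sum>i\<in>A. real (c i) * x i) \<le> t"
        "t - (\<Sum>i\<in>A. real (c i) * x i) \<le> real m * Rle \<delta>"
        using fin_kakeya[OF fA posA wnn cond _ True] t by auto
      define c' where "c' i = (if i \<in> A then c i else 0)" for i
      have "val (xs s) c' = (\<Sum>i\<in>A. real (c' i) * xs s i)"
        by (rule val_finite[OF fA]) (auto simp: c'_def)
      also have "\<dots> = (\<Sum>i\<in>A. real (c i) * x i)" by (rule sum.cong) (auto simp: c'_def xs_def A_def)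
      finally have "val (xs s) c' = (\<Sum>i\<in>A. real (c i) * x i)" .
      moreover have "\<forall>i. c' i \<le> m" using c by (auto simp: c'_def)
      ultimately have "(\<Sum>i\<in>A. real (c i) * x i) \<in> T s" unfolding T_def ach_mem by metis
      then show ?thesis using that c by blast
    next
      case False
      define c' where "c' i = (if i \<in> A then m else 0)" for i
      have "val (xs s) c' = (\<Sum>i\<in>A. real (c' i) * xs s i)"
        by (rule val_finite[OF fA]) (auto simp: c'_def)
      also have "\<dots> = (\<Sum>i\<in>A. real m * x i)" by (rule sum.cong) (auto simp: c'_def xs_def A_def)
      also have "\<dots> = real m * sum x A" by (simp add: sum_distrib_left)
      finally have "val (xs s) c' = real m * sum x A" .
      moreover have "\<forall>i. c' i \<le> m" by (auto simp: c'_def)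
      ultimately have "real m * sum x A \<in> T s" unfolding T_def ach_mem by metis
      moreover have "t - real m * sum x A \<le> real m * Rle \<delta>" using t RleA by (simp add: algebra_simps)
      ultimately show ?thesis using that False by auto
    qed
    then show "\<exists>y\<in>T s. dist y t < \<epsilon>" using dsm by (intro bexI[OF _ pT]) (simp add: dist_real_def)
  qed
  then show "t \<in> T s" using T_closed by (simp add: closure_closed)
qed

lemma fin_union:
  assumes sp: "s > 0" and sub: "{0..real m * Rle s} \<subseteq> T s"
  shows "is_finite_union_of_intervals E"
proof -
  have TT: "T s = {0..real m * Rle s}" using sub T_sub by blast
  obtain i where i: "x i < s" using exists_small[OF sp] by blast
  have "xs s i \<le> Rle s" unfolding Rle_def
    using sum_le_suminf[OF xs_summable, of "{i}" s] xs_nn by auto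
  then have Rp: "Rle s > 0" using i pos[of i] by (simp add: xs_def)
  have Lp: "real m * Rle s > 0" using Rp m1 by simp
  have "E = (\<Union>f\<in>F s. {f..f + real m * Rle s})"
    using decomp[OF sp] by (simp add: TT image_add_atLeastAtMost add.commute)
  moreover obtain n :: nat and g where Fg: "F s = g ` {i. i < n}" using finite_imp_nat_seg_image_inj_on[OF finite_F[OF sp]] by blast
  moreover have "F s \<noteq> {}" using decomp[OF sp] ach_nonempty[of x m] by auto
  ultimately have "n \<ge> 1" "E = (\<Union>i<n. {g i..g i + real m * Rle s})" by (auto simp: lessThan_def)
  then show ?thesis unfolding is_finite_union_of_intervals_def using Lp
    by (intro exI[of _ n] exI[of _ g] exI[of _ "\<lambda>i. g i + real m * Rle s"]) auto
qed

end

context ach begin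

lemma core_left:
  assumes iE: "interior E \<noteq> {}" and nfu: "\<not> is_finite_union_of_intervals E"
    and aE: "a \<in> E" and up: "u > 0" and gap: "\<And>y. y \<in> E \<Longrightarrow> \<not> (a < y \<and> y < a + u)"
  shows "(\<forall>\<epsilon>>0. \<exists>p q. p < q \<and> {p..q} \<subseteq> E \<and> a - \<epsilon> < p \<and> q < a) \<and> (\<forall>\<delta>>0. \<not> {a - \<delta>..a} \<subseteq> E)"
proof -
  obtain e where b: "\<And>i. e i \<le> m" and ae: "a = val x e" using aE by (auto simp: ach_mem)
  have em: "e j = m" if "x j < u" for j
  proof (rule forcing[OF b])
    show "val x e + x j \<notin> E" using gap[of "val x e + x j"] pos[of j] that ae by auto
  qed
  have part1: "\<exists>p q. p < q \<and> {p..q} \<subseteq> E \<and> a - \<epsilon> < p \<and> q < a" if ep: "\<epsilon> > 0" for \<epsilon>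
  proof -
    obtain \<sigma> where sp: "\<sigma> > 0" and su: "\<sigma> \<le> u/2" and sm: "real m * Rle \<sigma> < \<epsilon>"
      using Rle_small[OF ep, of "u/2"] up by auto
    obtain y0 where "y0 \<in> interior (T \<sigma>)" using int_T[OF sp iE] by blast
    then obtain r where rp: "r > 0" and br: "ball y0 r \<subseteq> T \<sigma>" by (auto simp: mem_interior)
    have "y0 - 3*r/4 \<in> T \<sigma>" "y0 + 3*r/4 \<in> T \<sigma>" using br rp by (auto simp: dist_real_def)
    then have lo: "y0 - 3*r/4 \<ge> 0" and hi: "y0 + 3*r/4 \<le> real m * Rle \<sigma>" using T_sub[of \<sigma>] by auto
    have sub: "{a - (y0 + r/2)..a - (y0 - r/2)} \<subseteq> E"
    proof
      fix z assume z: "z \<in> {a - (y0 + r/2)..a - (y0 - r/2)}"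
      have "a - z \<in> ball y0 r" using z rp by (auto simp: dist_real_def)
      then have "a - z \<in> T \<sigma>" using br by auto
      from shift_down[OF b _ this] have "val x e - (a - z) \<in> E" using em su up by force
      then show "z \<in> E" using ae by simp
    qed
    show ?thesis using sub rp lo hi sm
      by (intro exI[of _ "a - (y0 + r/2)"] exI[of _ "a - (y0 - r/2)"]) auto
  qed
  have part2: "\<not> {a - \<delta>..a} \<subseteq> E" if dp: "\<delta> > 0" for \<delta>
  proof
    assume full: "{a - \<delta>..a} \<subseteq> E"
    define Hs where "Hs = {j. u \<le> x j}"
    have fHs: "finite Hs" using finite_bigger[OF up] by (simp add: Hs_def)
    define D where "D = (\<lambda>d. \<Sum>j\<in>Hs. real_of_int (d j) * x j) ` PiE Hs (\<lambda>_. {- int m..int m}) \<inter> {0<..}"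
    have fD: "finite D" unfolding D_def by (intro finite_Int disjI1 finite_imageI finite_PiE fHs) auto
    define \<eta> where "\<eta> = (if D = {} then 1 else Min D)"
    have etap: "\<eta> > 0" using fD by (auto simp: \<eta>_def D_def Min_gr_iff)
    have etale: "\<And>v. v \<in> D \<Longrightarrow> \<eta> \<le> v" using fD by (auto simp: \<eta>_def)
    define s where "s = min (min \<eta> \<delta>) u / 2"
    have s_pos: "s > 0" using etap dp up by (simp add: s_def)
    have C: "x k \<le> real m * Rlt (x k)" if xks: "x k \<le> s" for k
    proof (rule ccontr)
      assume "\<not> ?thesis"
      then have lt: "real m * Rlt (x k) < x k" by simp
      define \<sigma> where "\<sigma> = (real m * Rlt (x k) + x k) / 2"
      have Rn: "real m * Rlt (x k) \<ge> 0" using Rlt_nn by simp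
      have s1: "real m * Rlt (x k) < \<sigma>" "\<sigma> < x k" "0 < \<sigma>" using lt Rn by (auto simp: \<sigma>_def)
      have sd: "\<sigma> \<le> \<delta>" "\<sigma> < u" "x k < \<eta>" using s1 xks etap dp up by (auto simp: s_def)
      have "a - \<sigma> \<in> E" using full sd s1 by auto
      then obtain e' where b': "\<And>i. e' i \<le> m" and ye: "a - \<sigma> = val x e'" by (auto simp: ach_mem)
      have em': "e' j = m" if "\<sigma> < x j" "x j < u" for j
      proof (rule forcing[OF b'])
        show "val x e' + x j \<notin> E" using gap[of "val x e' + x j"] that ye s1 by auto
      qed
      define g where "g j = (real (e j) - real (e' j)) * x j" for j
      have bnd: "\<bar>g j\<bar> \<le> real m * x j" for j
      proof -
        have "\<bar>real (e j) - real (e' j)\<bar> \<le> real m" using b[of j] b'[of j] by (simp add: abs_le_iff)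
        then show ?thesis using nn[of j] by (simp add: g_def abs_mult mult_right_mono)
      qed
      have sg: "summable g"
        by (rule summable_comparison_test[of _ "\<lambda>j. real m * x j"]) (use bnd sx in \<open>auto intro: summable_mult\<close>)
      have sumg: "suminf g = \<sigma>"
      proof -
        have "suminf g = val x e - val x e'"
          unfolding g_def val_def
          by (subst suminf_diff[OF summable_dig[OF _ sx b] summable_dig[OF _ sx b']]) (auto simp: nn algebra_simps)
        then show ?thesis using ae ye by simp
      qed
      define g1 where "g1 j = (if x j < u then g j else 0)" for j
      define g2 where "g2 j = (if j \<in> Hs then g j else 0)" for j
      have gsplit: "g = (\<lambda>j. g1 j + g2 j)" by (auto simp: fun_eq_iff g1_def g2_def Hs_def)
      have sg2: "summable g2" by (rule summable_finite[OF fHs]) (auto simp: g2_def)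
      have sg1: "summable g1"
        by (rule summable_comparison_test[of _ "\<lambda>j. real m * x j"]) (use bnd sx nn in \<open>auto simp: g1_def intro: summable_mult\<close>)
      have g1b: "0 \<le> g1 j \<and> g1 j \<le> real m * (if x j < x k then x j else 0)" for j
      proof (cases "x j < u")
        case True
        note ej = em[OF True]
        show ?thesis
        proof (cases "\<sigma> < x j")
          case True
          then show ?thesis using em'[OF True \<open>x j < u\<close>] ej nn[of j] by (simp add: g1_def g_def \<open>x j < u\<close>)
        next
          case False
          then have xjk: "x j < x k" using s1 by simp
          have "real (e' j) \<le> real m" using b'[of j] by simp
          then show ?thesis using \<open>x j < u\<close> ej xjk nn[of j]
            by (auto simp: g1_def g_def intro!: mult_right_mono mult_nonneg_nonneg)
        qed
      next
        case False
        then show ?thesis using nn[of j] by (simp add: g1_def)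
      qed
      have S1: "0 \<le> suminf g1" using g1b sg1 by (intro suminf_nonneg) auto
      have S1b: "suminf g1 \<le> real m * Rlt (x k)"
      proof -
        have "suminf g1 \<le> (\<Sum>j. real m * (if x j < x k then x j else 0))"
          by (rule suminf_le[OF _ sg1 summable_mult[OF Rlt_summable]]) (use g1b in auto)
        also have "\<dots> = real m * Rlt (x k)" unfolding Rlt_def by (rule suminf_mult[OF Rlt_summable])
        finally show ?thesis .
      qed
      have "\<sigma> = suminf g1 + suminf g2" using sumg suminf_add[OF sg1 sg2] gsplit by simp
      moreover have "suminf g2 = (\<Sum>j\<in>Hs. g j)" by (subst suminf_finite[OF fHs]) (auto simp: g2_def)
      ultimately have V: "(\<Sum>j\<in>Hs. g j) = \<sigma> - suminf g1" by simp
      have Vpos: "(\<Sum>j\<in>Hs. g j) > 0" using V S1b s1 by simp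
      define d where "d j = (if j \<in> Hs then int (e j) - int (e' j) else undefined)" for j
      have "\<And>j. - int m \<le> int (e j) - int (e' j) \<and> int (e j) - int (e' j) \<le> int m"
        using b b' by (smt (verit) of_nat_0_le_iff of_nat_mono)
      then have dPi: "d \<in> PiE Hs (\<lambda>_. {- int m..int m})" by (auto simp: d_def PiE_def extensional_def)
      have "(\<Sum>j\<in>Hs. real_of_int (d j) * x j) = (\<Sum>j\<in>Hs. g j)"
        by (rule sum.cong) (auto simp: d_def g_def)
      then have "(\<Sum>j\<in>Hs. g j) \<in> D" unfolding D_def using dPi Vpos by (auto intro!: image_eqI[of _ _ d])
      then have "\<eta> \<le> \<sigma> - suminf g1" using etale V by simp
      then show False using S1 s1 sd by simp
    qed
    have "{0..real m * Rle s} \<subseteq> T s" by (rule kakeya[OF s_pos C])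
    then have "is_finite_union_of_intervals E" by (rule fin_union[OF s_pos])
    then show False using nfu by simp
  qed
  show ?thesis using part1 part2 by blast
qed

end

lemma gap_endpoints:
  fixes K :: "real set"
  assumes cK: "closed K" and g: "is_gap K G"
  shows "Inf G \<in> K \<and> Sup G \<in> K \<and> Inf G < Sup G \<and> (\<forall>y. Inf G < y \<and> y < Sup G \<longrightarrow> y \<notin> K)"
proof -
  obtain z where zK: "z \<notin> K" and G: "G = connected_component_set (- K) z" and bG: "bounded G"
    using g unfolding is_gap_def by blast
  have zG: "z \<in> G" using zK G by (simp add: connected_component_refl)
  have GK: "G \<subseteq> - K" using G connected_component_subset by blast
  have oG: "open G" using G cK by (simp add: open_connected_component open_Compl)
  have cG: "connected G" using G connected_connected_component by blast
  have bb: "bdd_below G" "bdd_above G" using bG by (auto intro: bounded_imp_bdd_below bounded_imp_bdd_above)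
  have Gne: "G \<noteq> {}" using zG by auto
  have absorb: "y \<in> G" if yc: "y \<in> closure G" and yK: "y \<notin> K" for y
  proof -
    obtain r where rp: "r > 0" and br: "ball y r \<subseteq> - K"
      using yK cK by (metis ComplI open_Compl open_contains_ball)
    obtain w where wG: "w \<in> G" and wb: "dist w y < r" using yc rp unfolding closure_approachable by blast
    have wb': "w \<in> ball y r" using wb by (simp add: dist_commute)
    have "ball y r \<subseteq> connected_component_set (- K) w"
      by (rule connected_component_maximal[OF wb' connected_ball br])
    also have "\<dots> = G" using connected_component_eq[of w "- K" z] wG G by simp
    finally show ?thesis using rp by auto
  qed
  have infG: "Inf G \<notin> G"
  proof
    assume "Inf G \<in> G"
    then obtain r where "r > 0" "ball (Inf G) r \<subseteq> G" using oG open_contains_ball by blast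
    then have "Inf G - r/2 \<in> G" by (auto simp: dist_real_def)
    then have "Inf G \<le> Inf G - r/2" by (rule cInf_lower[OF _ bb(1)])
    then show False using \<open>r > 0\<close> by simp
  qed
  have supG: "Sup G \<notin> G"
  proof
    assume "Sup G \<in> G"
    then obtain r where "r > 0" "ball (Sup G) r \<subseteq> G" using oG open_contains_ball by blast
    then have "Sup G + r/2 \<in> G" by (auto simp: dist_real_def)
    then have "Sup G + r/2 \<le> Sup G" by (rule cSup_upper[OF _ bb(2)])
    then show False using \<open>r > 0\<close> by simp
  qed
  have iK: "Inf G \<in> K" using absorb[OF closure_contains_Inf[OF Gne bb(1)]] infG by blast
  have sK: "Sup G \<in> K" using absorb[OF closure_contains_Sup[OF Gne bb(2)]] supG by blast
  have "Inf G \<le> z" "z \<le> Sup G" using zG bb by (auto intro: cInf_lower cSup_upper)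
  moreover have "Inf G \<noteq> z" "z \<noteq> Sup G" using infG supG zG by auto
  ultimately have lt: "Inf G < Sup G" by simp
  have inside: "y \<notin> K" if y: "Inf G < y" "y < Sup G" for y
  proof -
    obtain g1 where g1: "g1 \<in> G" "g1 < y"
      using y(1) cInf_greatest[OF Gne, of y] by (metis not_le)
    obtain g2 where g2: "g2 \<in> G" "y < g2"
      using y(2) cSup_least[OF Gne, of y] by (metis not_le)
    have "y \<in> G" using cG g1 g2 unfolding connected_iff_interval by (meson less_imp_le)
    then show ?thesis using GK by auto
  qed
  show ?thesis using iK sK lt inside by blast
qed

lemma conn_between:
  fixes S :: "real set"
  assumes "connected S" "y \<in> S" "w \<in> S" "y \<le> z" "z \<le> w"
  shows "z \<in> S"
  using assms unfolding connected_iff_interval by blast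

lemma acc_left_from:
  fixes K :: "real set"
  assumes cK: "closed K" and aK: "a \<in> K"
    and ivs: "\<forall>\<epsilon>>0. \<exists>p q. p < q \<and> {p..q} \<subseteq> K \<and> a - \<epsilon> < p \<and> q < a"
    and nf: "\<forall>\<delta>>0. \<not> {a - \<delta>..a} \<subseteq> K"
  shows "acc_left K a"
  unfolding acc_left_def
proof (intro allI impI conjI)
  fix \<epsilon> :: real assume ep: "\<epsilon> > 0"
  obtain p q where pq: "p < q" "{p..q} \<subseteq> K" "a - \<epsilon> < p" "q < a" using ivs ep by blast
  have h: "\<not> {a - (a - q)..a} \<subseteq> K" by (rule nf[rule_format]) (use pq(4) in simp)
  then have "\<not> {q..a} \<subseteq> K" by simp
  then obtain z where z: "z \<in> {q..a}" "z \<notin> K" by blast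
  have qK: "q \<in> K" using pq by auto
  have zq: "q < z" "z < a" using z qK aK by (auto simp: order.order_iff_strict)
  define G where "G = connected_component_set (- K) z"
  have GK: "G \<subseteq> - K" unfolding G_def using connected_component_subset by blast
  have zG: "z \<in> G" using z by (simp add: G_def connected_component_refl)
  have cG: "connected G" unfolding G_def by simp
  have Gsub: "G \<subseteq> {q<..<a}"
  proof
    fix y assume yG: "y \<in> G"
    have "\<not> y \<le> q"
    proof
      assume "y \<le> q"
      then have "q \<in> G" using conn_between[OF cG yG zG] zq by simp
      then show False using GK qK by auto
    qed
    moreover have "\<not> a \<le> y"
    proof
      assume "a \<le> y"
      then have "a \<in> G" using conn_between[OF cG zG yG] zq by simp
      then show False using GK aK by auto
    qed
    ultimately show "y \<in> {q<..<a}" by simp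
  qed
  have "is_gap K G" unfolding is_gap_def
    using z Gsub by (auto simp: G_def intro: bounded_subset[OF bounded_Ioo])
  then show "\<exists>G. is_gap K G \<and> G \<subseteq> {a - \<epsilon><..<a}" using Gsub pq by (intro exI[of _ G]) auto
  obtain p2 q2 where pq2: "p2 < q2" "{p2..q2} \<subseteq> K" "a - (a - z) < p2" "q2 < a" using ivs zq by (meson diff_gt_0_iff_gt)
  have p2K: "p2 \<in> K" using pq2 by auto
  define I where "I = connected_component_set K p2"
  have IK: "I \<subseteq> K" unfolding I_def using connected_component_subset by blast
  have cI: "connected I" unfolding I_def by simp
  have p2I: "p2 \<in> I" using p2K by (simp add: I_def connected_component_refl)
  have subI: "{p2..q2} \<subseteq> I" unfolding I_def
    by (rule connected_component_maximal) (use pq2 in auto)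
  have Isub: "I \<subseteq> {z<..<a}"
  proof
    fix y assume yI: "y \<in> I"
    have "\<not> y \<le> z"
    proof
      assume "y \<le> z"
      then have "z \<in> I" using conn_between[OF cI yI p2I] pq2 by simp
      then show False using IK z by auto
    qed
    moreover have "\<not> a \<le> y"
    proof
      assume "a \<le> y"
      then have "{p2..a} \<subseteq> I" using conn_between[OF cI p2I yI] by auto
      then have "{a - (a - p2)..a} \<subseteq> K" using IK by auto
      moreover have "a - p2 > 0" using pq2 by simp
      ultimately show False using nf by blast
    qed
    ultimately show "y \<in> {z<..<a}" by simp
  qed
  have "p2 \<in> I" "q2 \<in> I" using subI pq2(1) by auto
  moreover have "p2 \<noteq> q2" using pq2(1) by simp
  ultimately have "is_interval_of K I" unfolding is_interval_of_def
    using p2K I_def by blast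
  then show "\<exists>I. is_interval_of K I \<and> I \<subseteq> {a - \<epsilon><..<a}" using Isub zq pq by (intro exI[of _ I]) auto
qed

lemma acc_right_from:
  fixes K :: "real set"
  assumes cK: "closed K" and bK: "b \<in> K"
    and ivs: "\<forall>\<epsilon>>0. \<exists>p q. p < q \<and> {p..q} \<subseteq> K \<and> b < p \<and> q < b + \<epsilon>"
    and nf: "\<forall>\<delta>>0. \<not> {b..b + \<delta>} \<subseteq> K"
  shows "acc_right K b"
  unfolding acc_right_def
proof (intro allI impI conjI)
  fix \<epsilon> :: real assume ep: "\<epsilon> > 0"
  obtain p q where pq: "p < q" "{p..q} \<subseteq> K" "b < p" "q < b + \<epsilon>" using ivs ep by blast
  have h: "\<not> {b..b + (p - b)} \<subseteq> K" by (rule nf[rule_format]) (use pq(3) in simp)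
  then have "\<not> {b..p} \<subseteq> K" by simp
  then obtain z where z: "z \<in> {b..p}" "z \<notin> K" by blast
  have pK: "p \<in> K" using pq by auto
  have zq: "b < z" "z < p" using z pK bK by (auto simp: order.order_iff_strict)
  define G where "G = connected_component_set (- K) z"
  have GK: "G \<subseteq> - K" unfolding G_def using connected_component_subset by blast
  have zG: "z \<in> G" using z by (simp add: G_def connected_component_refl)
  have cG: "connected G" unfolding G_def by simp
  have Gsub: "G \<subseteq> {b<..<p}"
  proof
    fix y assume yG: "y \<in> G"
    have "\<not> y \<le> b"
    proof
      assume "y \<le> b"
      then have "b \<in> G" using conn_between[OF cG yG zG] zq by simp
      then show False using GK bK by auto
    qed
    moreover have "\<not> p \<le> y"
    proof
      assume "p \<le> y"
      then have "p \<in> G" using conn_between[OF cG zG yG] zq by simp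
      then show False using GK pK by auto
    qed
    ultimately show "y \<in> {b<..<p}" by simp
  qed
  have "is_gap K G" unfolding is_gap_def
    using z Gsub by (auto simp: G_def intro: bounded_subset[OF bounded_Ioo])
  then show "\<exists>G. is_gap K G \<and> G \<subseteq> {b<..<b + \<epsilon>}" using Gsub pq by (intro exI[of _ G]) auto
  obtain p2 q2 where pq2: "p2 < q2" "{p2..q2} \<subseteq> K" "b < p2" "q2 < b + (z - b)" using ivs zq by (meson diff_gt_0_iff_gt)
  have q2K: "q2 \<in> K" using pq2 by auto
  define I where "I = connected_component_set K q2"
  have IK: "I \<subseteq> K" unfolding I_def using connected_component_subset by blast
  have cI: "connected I" unfolding I_def by simp
  have q2I: "q2 \<in> I" using q2K by (simp add: I_def connected_component_refl)
  have subI: "{p2..q2} \<subseteq> I" unfolding I_def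
    by (rule connected_component_maximal) (use pq2 in auto)
  have Isub: "I \<subseteq> {b<..<z}"
  proof
    fix y assume yI: "y \<in> I"
    have "\<not> z \<le> y"
    proof
      assume "z \<le> y"
      then have "z \<in> I" using conn_between[OF cI q2I yI] pq2 by simp
      then show False using IK z by auto
    qed
    moreover have "\<not> y \<le> b"
    proof
      assume "y \<le> b"
      then have "{b..q2} \<subseteq> I" using conn_between[OF cI yI q2I] by auto
      then have "{b..b + (q2 - b)} \<subseteq> K" using IK by auto
      moreover have "q2 - b > 0" using pq2 by simp
      ultimately show False using nf by blast
    qed
    ultimately show "y \<in> {b<..<z}" by simp
  qed
  have "p2 \<in> I" "q2 \<in> I" using subI pq2(1) by auto
  moreover have "p2 \<noteq> q2" using pq2(1) by simp
  ultimately have "is_interval_of K I" unfolding is_interval_of_def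
    using q2K I_def by blast
  then show "\<exists>I. is_interval_of K I \<and> I \<subseteq> {b<..<b + \<epsilon>}" using Isub zq pq by (intro exI[of _ I]) auto
qed

context ach begin

lemma reflect: assumes "y \<in> E" shows "real m * suminf x - y \<in> E"
proof -
  obtain e where b: "\<And>i. e i \<le> m" and y: "y = val x e" using assms by (auto simp: ach_mem)
  have b': "\<And>i. (m - e i) \<le> m" by simp
  have "val x (\<lambda>i. m - e i) = (\<Sum>i. real m * x i - real (e i) * x i)"
    unfolding val_def by (rule suminf_cong) (use b in \<open>auto simp: of_nat_diff algebra_simps\<close>)
  also have "\<dots> = (\<Sum>i. real m * x i) - val x e"
    unfolding val_def by (rule suminf_diff[OF summable_mult[OF sx] summable_dig[OF _ sx b], symmetric]) (use nn in auto)
  also have "(\<Sum>i. real m * x i) = real m * suminf x" by (rule suminf_mult[OF sx])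
  finally show ?thesis unfolding ach_mem using y b' by metis
qed

theorem caseC:
  assumes iE: "interior E \<noteq> {}" and nfu: "\<not> is_finite_union_of_intervals E"
  shows "is_M_cantorval E"
  unfolding is_M_cantorval_def
proof (intro conjI allI impI)
  show cE: "compact E" by (rule ach_compact[OF _ sx]) (use nn in auto)
  show "perfect_set E" by (rule ach_perfect[OF pos sx m1])
  have clE: "closed E" using cE by (rule compact_imp_closed)
  fix G assume g: "is_gap E G"
  define a where "a = Inf G"
  define b where "b = Sup G"
  have ab: "a \<in> E" "b \<in> E" "a < b" "\<And>y. a < y \<Longrightarrow> y < b \<Longrightarrow> y \<notin> E"
    using gap_endpoints[OF clE g] by (auto simp: a_def b_def)
  define u where "u = b - a"
  have up: "u > 0" using ab by (simp add: u_def)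
  have gapa: "\<And>y. y \<in> E \<Longrightarrow> \<not> (a < y \<and> y < a + u)" using ab by (auto simp: u_def)
  have L: "(\<forall>\<epsilon>>0. \<exists>p q. p < q \<and> {p..q} \<subseteq> E \<and> a - \<epsilon> < p \<and> q < a) \<and> (\<forall>\<delta>>0. \<not> {a - \<delta>..a} \<subseteq> E)"
    by (rule core_left[OF iE nfu ab(1) up gapa])
  show "acc_left E (Inf G)" unfolding a_def[symmetric]
    by (rule acc_left_from[OF clE ab(1)]) (use L in auto)
  define S where "S = real m * suminf x"
  define b' where "b' = S - b"
  have b'E: "b' \<in> E" using reflect[OF ab(2)] by (simp add: b'_def S_def)
  have gapb: "\<not> (b' < y \<and> y < b' + u)" if yE: "y \<in> E" for y
  proof
    assume h: "b' < y \<and> y < b' + u"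
    have "S - y \<in> E" using reflect[OF yE] by (simp add: S_def)
    moreover have "a < S - y" "S - y < b" using h by (auto simp: b'_def u_def)
    ultimately show False using ab(4) by blast
  qed
  have R: "(\<forall>\<epsilon>>0. \<exists>p q. p < q \<and> {p..q} \<subseteq> E \<and> b' - \<epsilon> < p \<and> q < b') \<and> (\<forall>\<delta>>0. \<not> {b' - \<delta>..b'} \<subseteq> E)"
    by (rule core_left[OF iE nfu b'E up gapb])
  have R1: "\<forall>\<epsilon>>0. \<exists>p q. p < q \<and> {p..q} \<subseteq> E \<and> b < p \<and> q < b + \<epsilon>"
  proof (intro allI impI)
    fix \<epsilon> :: real assume "\<epsilon> > 0"
    then obtain p q where pq: "p < q" "{p..q} \<subseteq> E" "b' - \<epsilon> < p" "q < b'" using R by blast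
    have "{S - q..S - p} \<subseteq> E"
    proof
      fix z assume "z \<in> {S - q..S - p}"
      then have "S - z \<in> {p..q}" by auto
      then have "S - z \<in> E" using pq(2) by auto
      from reflect[OF this] show "z \<in> E" by (simp add: S_def)
    qed
    then show "\<exists>p q. p < q \<and> {p..q} \<subseteq> E \<and> b < p \<and> q < b + \<epsilon>"
      using pq by (intro exI[of _ "S - q"] exI[of _ "S - p"]) (auto simp: b'_def)
  qed
  have R2: "\<forall>\<delta>>0. \<not> {b..b + \<delta>} \<subseteq> E"
  proof (intro allI impI notI)
    fix \<delta> :: real assume dp: "\<delta> > 0" and sub: "{b..b + \<delta>} \<subseteq> E"
    have "{b' - \<delta>..b'} \<subseteq> E"
    proof
      fix z assume "z \<in> {b' - \<delta>..b'}"
      then have "S - z \<in> {b..b + \<delta>}" by (auto simp: b'_def)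
      then have "S - z \<in> E" using sub by auto
      from reflect[OF this] show "z \<in> E" by (simp add: S_def)
    qed
    then show False using R dp by blast
  qed
  show "acc_right E (Sup G)" unfolding b_def[symmetric]
    by (rule acc_right_from[OF clE ab(2) R1 R2])
qed

end

definition lexless :: "(nat \<Rightarrow> bool) \<Rightarrow> (nat \<Rightarrow> bool) \<Rightarrow> bool" where
  "lexless w w' \<longleftrightarrow> (\<exists>n. (\<forall>i<n. w i = w' i) \<and> \<not> w n \<and> w' n)"

lemma lex_total: assumes "w \<noteq> w'" shows "lexless w w' \<or> lexless w' w"
proof -
  obtain k where "w k \<noteq> w' k" using assms by auto
  define n where "n = (LEAST n. w n \<noteq> w' n)"
  have n: "w n \<noteq> w' n" unfolding n_def by (rule LeastI[of _ k]) fact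
  have before: "\<forall>i<n. w i = w' i" unfolding n_def using not_less_Least by blast
  show ?thesis using n before unfolding lexless_def by (cases "w n") auto
qed

lemma lex_asym: assumes "lexless w w'" shows "\<not> lexless w' w"
proof
  assume "lexless w' w"
  then obtain n' where n': "\<forall>i<n'. w' i = w i" "\<not> w' n'" "w n'" unfolding lexless_def by blast
  obtain n where n: "\<forall>i<n. w i = w' i" "\<not> w n" "w' n" using assms unfolding lexless_def by blast
  show False using n n' by (cases n n' rule: linorder_cases) auto
qed

lemma mono_cont:
  fixes h :: "real \<Rightarrow> real"
  assumes mono: "\<And>s t. s \<in> S \<Longrightarrow> t \<in> S \<Longrightarrow> s < t \<Longrightarrow> h s < h t" and cl: "closed (h ` S)"
  shows "continuous_on S h"
  unfolding continuous_on_iff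
proof (intro ballI allI impI)
  fix t e assume tS: "t \<in> S" and ep: "(e::real) > 0"
  have le: "\<And>s t. s \<in> S \<Longrightarrow> t \<in> S \<Longrightarrow> h s \<le> h t \<Longrightarrow> s \<le> t"
    using mono by (metis not_le)
  have right: "\<exists>d>0. \<forall>s\<in>S. t < s \<and> s < t + d \<longrightarrow> h s < h t + e"
  proof (cases "\<exists>s0\<in>S. t < s0 \<and> h s0 < h t + e")
    case True
    then obtain s0 where "s0 \<in> S" "t < s0" "h s0 < h t + e" by blast
    then show ?thesis using mono by (intro exI[of _ "s0 - t"]) (auto, meson less_trans)
  next
    case False
    define A where "A = {s\<in>S. t < s}"
    show ?thesis
    proof (cases "A = {}")
      case True
      then show ?thesis by (intro exI[of _ 1]) (auto simp: A_def)
    next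
      case Ane: False
      have lb: "\<And>v. v \<in> h ` A \<Longrightarrow> h t + e \<le> v" using False by (auto simp: A_def not_less)
      have bdd: "bdd_below (h ` A)" using lb by (auto simp: bdd_below_def)
      define L where "L = Inf (h ` A)"
      have "L \<in> closure (h ` A)" unfolding L_def using Ane bdd by (intro closure_contains_Inf) auto
      also have "\<dots> \<subseteq> h ` S" using cl by (intro closure_minimal) (auto simp: A_def)
      finally obtain s1 where s1: "s1 \<in> S" "h s1 = L" by auto
      have "h t + e \<le> L" unfolding L_def using Ane lb by (intro cInf_greatest) auto
      then have "h t < h s1" using s1 ep by simp
      then have ts1: "t < s1"
      proof -
        assume hh: "h t < h s1"
        show ?thesis
        proof (rule ccontr)
          assume "\<not> t < s1"
          then have "s1 < t \<or> s1 = t" by auto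
          then show False using mono[OF s1(1) tS] hh by auto
        qed
      qed
      have "\<forall>s\<in>S. t < s \<and> s < t + (s1 - t) \<longrightarrow> h s < h t + e"
      proof (intro ballI impI)
        fix s assume sS: "s \<in> S" and h: "t < s \<and> s < t + (s1 - t)"
        have "L \<le> h s" unfolding L_def using sS h bdd by (intro cInf_lower) (auto simp: A_def)
        moreover have "h s < h s1" using mono[OF sS s1(1)] h by simp
        ultimately show "h s < h t + e" using s1 by simp
      qed
      then show ?thesis using ts1 by (intro exI[of _ "s1 - t"]) auto
    qed
  qed
  have left: "\<exists>d>0. \<forall>s\<in>S. t - d < s \<and> s < t \<longrightarrow> h t - e < h s"
  proof (cases "\<exists>s0\<in>S. s0 < t \<and> h t - e < h s0")
    case True
    then obtain s0 where "s0 \<in> S" "s0 < t" "h t - e < h s0" by blast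
    then show ?thesis using mono by (intro exI[of _ "t - s0"]) (auto, meson less_trans)
  next
    case False
    define A where "A = {s\<in>S. s < t}"
    show ?thesis
    proof (cases "A = {}")
      case True
      then show ?thesis by (intro exI[of _ 1]) (auto simp: A_def)
    next
      case Ane: False
      have ub: "\<And>v. v \<in> h ` A \<Longrightarrow> v \<le> h t - e" using False by (auto simp: A_def not_less)
      have bdd: "bdd_above (h ` A)" using ub by (auto simp: bdd_above_def)
      define L where "L = Sup (h ` A)"
      have "L \<in> closure (h ` A)" unfolding L_def using Ane bdd by (intro closure_contains_Sup) auto
      also have "\<dots> \<subseteq> h ` S" using cl by (intro closure_minimal) (auto simp: A_def)
      finally obtain s1 where s1: "s1 \<in> S" "h s1 = L" by auto
      have "L \<le> h t - e" unfolding L_def using Ane ub by (intro cSup_least) auto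
      then have "h s1 < h t" using s1 ep by simp
      then have ts1: "s1 < t"
      proof -
        assume hh: "h s1 < h t"
        show ?thesis
        proof (rule ccontr)
          assume "\<not> s1 < t"
          then have "t < s1 \<or> s1 = t" by auto
          then show False using mono[OF tS s1(1)] hh by auto
        qed
      qed
      have "\<forall>s\<in>S. t - (t - s1) < s \<and> s < t \<longrightarrow> h t - e < h s"
      proof (intro ballI impI)
        fix s assume sS: "s \<in> S" and h: "t - (t - s1) < s \<and> s < t"
        have "h s \<le> L" unfolding L_def using sS h bdd by (intro cSup_upper) (auto simp: A_def)
        moreover have "h s1 < h s" using mono[OF s1(1) sS] h by simp
        ultimately show "h t - e < h s" using s1 by simp
      qed
      then show ?thesis using ts1 by (intro exI[of _ "t - s1"]) auto
    qed
  qed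
  obtain d1 where d1: "d1 > 0" "\<forall>s\<in>S. t < s \<and> s < t + d1 \<longrightarrow> h s < h t + e" using right by blast
  obtain d2 where d2: "d2 > 0" "\<forall>s\<in>S. t - d2 < s \<and> s < t \<longrightarrow> h t - e < h s" using left by blast
  show "\<exists>d>0. \<forall>s\<in>S. dist s t < d \<longrightarrow> dist (h s) (h t) < e"
  proof (intro exI[of _ "min d1 d2"] conjI ballI impI)
    show "min d1 d2 > 0" using d1 d2 by simp
    fix s assume sS: "s \<in> S" and ds: "dist s t < min d1 d2"
    show "dist (h s) (h t) < e"
    proof (cases s t rule: linorder_cases)
      case less
      then have "h t - e < h s" "h s < h t" using d2 ds sS mono[OF sS tS] by (auto simp: dist_real_def)
      then show ?thesis by (simp add: dist_real_def)
    next
      case equal then show ?thesis using ep by simp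
    next
      case greater
      then have "h s < h t + e" "h t < h s" using d1 ds sS mono[OF tS sS] by (auto simp: dist_real_def)
      then show ?thesis by (simp add: dist_real_def)
    qed
  qed
qed

locale splitK =
  fixes K :: "real set"
  assumes cK: "compact K" and neK: "K \<noteq> {}" and perf: "\<And>y. y \<in> K \<Longrightarrow> y islimpt K"
    and noint: "interior K = {}"
begin

definition pcp :: "real \<times> real \<Rightarrow> real set" where "pcp p = K \<inter> {fst p<..<snd p}"
definition good :: "real \<times> real \<Rightarrow> bool" where
  "good p \<longleftrightarrow> fst p < snd p \<and> fst p \<notin> K \<and> snd p \<notin> K \<and> pcp p \<noteq> {}"
definition lo :: "real \<times> real \<Rightarrow> real" where "lo p = Inf (pcp p)"
definition hi :: "real \<times> real \<Rightarrow> real" where "hi p = Sup (pcp p)"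
definition cpt :: "real \<times> real \<Rightarrow> real" where
  "cpt p = (SOME c. lo p + (hi p - lo p)/3 < c \<and> c < hi p - (hi p - lo p)/3 \<and> c \<notin> K)"
definition stp :: "real \<times> real \<Rightarrow> bool \<Rightarrow> real \<times> real" where
  "stp p b = (if b then (cpt p, snd p) else (fst p, cpt p))"

lemma clK: "closed K" using cK by (rule compact_imp_closed)
lemma bK: "bounded K" using cK by (rule compact_imp_bounded)

lemma pcp_closed: assumes "good p" shows "closed (pcp p)"
proof -
  have "pcp p = K \<inter> {fst p..snd p}" using assms by (auto simp: pcp_def good_def order.order_iff_strict)
  then show ?thesis using clK by (simp add: closed_Int)
qed

lemma pcp_bdd: "bdd_below (pcp p)" "bdd_above (pcp p)"
  unfolding pcp_def using bK by (auto intro: bounded_imp_bdd_below bounded_imp_bdd_above bounded_subset)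

lemma lohi: assumes g: "good p"
  shows "lo p \<in> pcp p" "hi p \<in> pcp p" "\<And>y. y \<in> pcp p \<Longrightarrow> lo p \<le> y \<and> y \<le> hi p"
proof -
  have ne: "pcp p \<noteq> {}" using g by (simp add: good_def)
  show "lo p \<in> pcp p" unfolding lo_def by (rule closed_contains_Inf[OF ne pcp_bdd(1) pcp_closed[OF g]])
  show "hi p \<in> pcp p" unfolding hi_def by (rule closed_contains_Sup[OF ne pcp_bdd(2) pcp_closed[OF g]])
  fix y assume "y \<in> pcp p"
  then show "lo p \<le> y \<and> y \<le> hi p" unfolding lo_def hi_def
    using cInf_lower[OF _ pcp_bdd(1)] cSup_upper[OF _ pcp_bdd(2)] by blast
qed

lemma lo_lt_hi: assumes g: "good p" shows "lo p < hi p"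
proof -
  have l: "lo p \<in> K" "fst p < lo p" "lo p < snd p" using lohi(1)[OF g] by (auto simp: pcp_def)
  define r where "r = min (lo p - fst p) (snd p - lo p)"
  have rp: "r > 0" using l by (simp add: r_def)
  obtain y where y: "y \<in> K" "y \<noteq> lo p" "dist y (lo p) < r" using perf[OF l(1)] rp unfolding islimpt_approachable by blast
  have "y \<in> pcp p" using y by (auto simp: pcp_def r_def dist_real_def)
  then have "lo p \<le> y" "y \<le> hi p" using lohi(3)[OF g] by auto
  then show ?thesis using y(2) by simp
qed

lemma cpt_props: assumes g: "good p"
  shows "lo p + (hi p - lo p)/3 < cpt p \<and> cpt p < hi p - (hi p - lo p)/3 \<and> cpt p \<notin> K"
proof -
  let ?a = "lo p + (hi p - lo p)/3" and ?b = "hi p - (hi p - lo p)/3"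
  have ab: "?a < ?b" using lo_lt_hi[OF g] by (simp add: field_simps)
  have "\<exists>c. ?a < c \<and> c < ?b \<and> c \<notin> K"
  proof (rule ccontr)
    assume "\<not> ?thesis"
    then have "{?a<..<?b} \<subseteq> K" by auto
    then have "{?a<..<?b} \<subseteq> interior K" by (intro interior_maximal) auto
    then show False using noint ab by auto
  qed
  then show ?thesis unfolding cpt_def by (rule someI_ex)
qed

lemma cpt_between: assumes g: "good p"
  shows "fst p < lo p" "hi p < snd p" "lo p < cpt p" "cpt p < hi p" "fst p < cpt p" "cpt p < snd p"
proof -
  show a: "fst p < lo p" "hi p < snd p" using lohi[OF g] by (auto simp: pcp_def)
  show b: "lo p < cpt p" "cpt p < hi p" using cpt_props[OF g] lo_lt_hi[OF g] by (auto simp: field_simps)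
  show "fst p < cpt p" "cpt p < snd p" using a b by auto
qed

lemma stp_sub: "pcp (stp p b) \<subseteq> pcp p" if g: "good p"
  using cpt_between[OF g] by (auto simp: stp_def pcp_def)

lemma stp_good: assumes g: "good p" shows "good (stp p b)"
proof (cases b)
  case True
  have "hi p \<in> pcp (stp p b)" using True lohi(2)[OF g] cpt_between[OF g] by (auto simp: stp_def pcp_def)
  then show ?thesis using True cpt_between[OF g] cpt_props[OF g] g by (auto simp: good_def stp_def)
next
  case False
  have "lo p \<in> pcp (stp p b)" using False lohi(1)[OF g] cpt_between[OF g] by (auto simp: stp_def pcp_def)
  then show ?thesis using False cpt_between[OF g] cpt_props[OF g] g by (auto simp: good_def stp_def)
qed

lemma stp_left: "good p \<Longrightarrow> pcp (stp p False) \<subseteq> {..<cpt p}" by (auto simp: stp_def pcp_def)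
lemma stp_right: "good p \<Longrightarrow> pcp (stp p True) \<subseteq> {cpt p<..}" by (auto simp: stp_def pcp_def)

lemma stp_cover: assumes g: "good p" and y: "y \<in> pcp p" shows "y \<in> pcp (stp p (cpt p < y))"
proof -
  have "y \<noteq> cpt p" using cpt_props[OF g] y by (auto simp: pcp_def)
  then show ?thesis using y by (auto simp: stp_def pcp_def)
qed

lemma stp_width: assumes g: "good p" shows "hi (stp p b) - lo (stp p b) \<le> 2/3 * (hi p - lo p)"
proof -
  have g': "good (stp p b)" by (rule stp_good[OF g])
  have c: "lo p + (hi p - lo p)/3 < cpt p" "cpt p < hi p - (hi p - lo p)/3" using cpt_props[OF g] by auto
  have sub: "pcp (stp p b) \<subseteq> pcp p" by (rule stp_sub[OF g])
  show ?thesis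
  proof (cases b)
    case True
    have "lo (stp p b) \<in> pcp (stp p b)" "hi (stp p b) \<in> pcp (stp p b)" using lohi[OF g'] by auto
    then have "cpt p < lo (stp p b)" "hi (stp p b) \<le> hi p"
      using stp_right[OF g] True sub lohi(3)[OF g] by auto
    then show ?thesis using c by (auto simp: field_simps)
  next
    case False
    have "lo (stp p b) \<in> pcp (stp p b)" "hi (stp p b) \<in> pcp (stp p b)" using lohi[OF g'] by auto
    then have "hi (stp p b) < cpt p" "lo p \<le> lo (stp p b)"
      using stp_left[OF g] False sub lohi(3)[OF g] by auto
    then show ?thesis using c by (auto simp: field_simps)
  qed
qed

definition J0 :: "real \<times> real" where "J0 = (Inf K - 1, Sup K + 1)"

primrec J :: "(nat \<Rightarrow> bool) \<Rightarrow> nat \<Rightarrow> real \<times> real" where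
  "J w 0 = J0"
| "J w (Suc n) = stp (J w n) (w n)"

lemma J0_good: "good J0"
proof -
  have bb: "bdd_below K" "bdd_above K" using bK by (auto intro: bounded_imp_bdd_below bounded_imp_bdd_above)
  have "\<And>y. y \<in> K \<Longrightarrow> Inf K \<le> y \<and> y \<le> Sup K" using bb by (auto intro: cInf_lower cSup_upper)
  moreover obtain y where "y \<in> K" using neK by auto
  ultimately have "y \<in> pcp J0" "Inf K - 1 \<notin> K" "Sup K + 1 \<notin> K" "Inf K - 1 < Sup K + 1"
    by (force simp: pcp_def J0_def)+
  then show ?thesis unfolding good_def by (auto simp: J0_def)
qed

lemma J_good: "good (J w n)" by (induction n) (auto simp: J0_good stp_good)

lemma J_dec: "m \<le> n \<Longrightarrow> pcp (J w n) \<subseteq> pcp (J w m)"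
proof (induction n)
  case 0 then show ?case by simp
next
  case (Suc n)
  show ?case
  proof (cases "m = Suc n")
    case False
    then have "m \<le> n" using Suc by simp
    then show ?thesis using Suc stp_sub[OF J_good] by force
  qed simp
qed

lemma J_width: "hi (J w n) - lo (J w n) \<le> (2/3)^n * (hi J0 - lo J0)"
proof (induction n)
  case 0 then show ?case by simp
next
  case (Suc n)
  have "hi (J w (Suc n)) - lo (J w (Suc n)) \<le> 2/3 * (hi (J w n) - lo (J w n))"
    using stp_width[OF J_good] by simp
  also have "\<dots> \<le> 2/3 * ((2/3)^n * (hi J0 - lo J0))" using Suc by simp
  finally show ?case by simp
qed

lemma J_prefix: "(\<And>i. i < n \<Longrightarrow> w i = w' i) \<Longrightarrow> J w n = J w' n"
  by (induction n) auto

lemma nest: "\<exists>y. \<Inter> (range (\<lambda>n. pcp (J w n))) = {y}"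
proof (rule decreasing_closed_nest_sing)
  show "\<And>n. closed (pcp (J w n))" using pcp_closed[OF J_good] by simp
  show "\<And>n. pcp (J w n) \<noteq> {}" using J_good by (simp add: good_def)
  show "\<And>m n. m \<le> n \<Longrightarrow> pcp (J w n) \<subseteq> pcp (J w m)" by (rule J_dec)
  fix e :: real assume ep: "e > 0"
  have W0: "hi J0 - lo J0 \<ge> 0" using lo_lt_hi[OF J0_good] by simp
  obtain n where n: "(2/3::real)^n * (hi J0 - lo J0) < e"
  proof -
    have "(\<lambda>n. (2/3::real)^n * (hi J0 - lo J0)) \<longlonglongrightarrow> 0 * (hi J0 - lo J0)"
      by (intro tendsto_mult tendsto_const LIMSEQ_realpow_zero) auto
    then have "\<forall>\<^sub>F n in sequentially. (2/3::real)^n * (hi J0 - lo J0) < e"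
      using ep by (auto dest: order_tendstoD)
    then show ?thesis using that by (auto simp: eventually_sequentially)
  qed
  show "\<exists>n. \<forall>x\<in>pcp (J w n). \<forall>y\<in>pcp (J w n). dist x y < e"
  proof (intro exI ballI)
    fix a b assume "a \<in> pcp (J w n)" "b \<in> pcp (J w n)"
    then have "lo (J w n) \<le> a" "a \<le> hi (J w n)" "lo (J w n) \<le> b" "b \<le> hi (J w n)"
      using lohi(3)[OF J_good] by auto
    then have "dist a b \<le> hi (J w n) - lo (J w n)" by (simp add: dist_real_def abs_le_iff)
    then show "dist a b < e" using J_width[of w n] n by simp
  qed
qed

definition Phi :: "(nat \<Rightarrow> bool) \<Rightarrow> real" where
  "Phi w = (SOME y. \<Inter> (range (\<lambda>n. pcp (J w n))) = {y})"

lemma Phi_in: "\<Inter> (range (\<lambda>n. pcp (J w n))) = {Phi w}"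
  unfolding Phi_def by (rule someI_ex[OF nest])

lemma Phi_K: "Phi w \<in> K" using Phi_in[of w] by (auto simp: pcp_def)

lemma Phi_J: "Phi w \<in> pcp (J w n)" using Phi_in[of w] by blast

lemma Phi_mono: assumes "lexless w w'" shows "Phi w < Phi w'"
proof -
  obtain n where n: "\<forall>i<n. w i = w' i" "\<not> w n" "w' n" using assms unfolding lexless_def by blast
  have same: "J w n = J w' n" using n(1) by (intro J_prefix) auto
  have "Phi w \<in> pcp (J w (Suc n))" by (rule Phi_J)
  then have "Phi w < cpt (J w n)" using stp_left[OF J_good] n(2) by auto
  moreover have "Phi w' \<in> pcp (J w' (Suc n))" by (rule Phi_J)
  then have "cpt (J w n) < Phi w'" using stp_right[OF J_good] n(3) same by auto
  ultimately show ?thesis by simp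
qed

lemma Phi_surj: assumes yK: "y \<in> K" shows "\<exists>w. Phi w = y"
proof -
  define Y where "Y = rec_nat J0 (\<lambda>n p. stp p (cpt p < y))"
  have Y0: "Y 0 = J0" and YS: "\<And>n. Y (Suc n) = stp (Y n) (cpt (Y n) < y)" by (simp_all add: Y_def)
  define w where "w n = (cpt (Y n) < y)" for n
  have JY: "J w n = Y n" for n by (induction n) (simp_all add: Y0 YS w_def)
  have inY: "good (Y n) \<and> y \<in> pcp (Y n)" for n
  proof (induction n)
    case 0
    have "y \<in> pcp J0"
    proof -
      have bb: "bdd_below K" "bdd_above K" using bK by (auto intro: bounded_imp_bdd_below bounded_imp_bdd_above)
      then have "Inf K \<le> y" "y \<le> Sup K" using yK by (auto intro: cInf_lower cSup_upper)
      then show ?thesis using yK by (auto simp: pcp_def J0_def)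
    qed
    then show ?case using J0_good Y0 by simp
  next
    case (Suc n)
    then show ?case using stp_good stp_cover by (simp add: YS)
  qed
  have "y \<in> \<Inter> (range (\<lambda>n. pcp (J w n)))" using inY JY by auto
  then show ?thesis using Phi_in[of w] by auto
qed

end

definition zc :: "nat \<Rightarrow> real" where "zc i = 2 / 3 ^ Suc i"
definition dg :: "(nat \<Rightarrow> bool) \<Rightarrow> nat \<Rightarrow> nat" where "dg w i = (if w i then 1 else 0)"
definition Psi :: "(nat \<Rightarrow> bool) \<Rightarrow> real" where "Psi w = val zc (dg w)"
definition Pn :: "nat \<Rightarrow> (nat \<Rightarrow> bool) \<Rightarrow> real" where "Pn n w = (\<Sum>i<n. real (dg w i) * zc i)"

lemma zc_pos: "zc i > 0" by (simp add: zc_def)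
lemma zc_nn: "zc i \<ge> 0" by (simp add: zc_def)

lemma zc_tail: "(\<lambda>i. zc (i + k)) sums (1 / 3 ^ k)"
proof -
  have g: "(\<lambda>i. (1/3::real) ^ i) sums (1 / (1 - 1/3))" by (rule geometric_sums) simp
  have "(\<lambda>i. (2 / 3 ^ Suc k) * (1/3::real) ^ i) sums ((2 / 3 ^ Suc k) * (1 / (1 - 1/3)))"
    by (rule sums_mult[OF g])
  moreover have "(\<lambda>i. (2 / 3 ^ Suc k) * (1/3::real) ^ i) = (\<lambda>i. zc (i + k))"
    by (auto simp: fun_eq_iff zc_def power_add field_simps power_one_over)
  moreover have "(2 / 3 ^ Suc k) * (1 / (1 - 1/3)) = (1 / 3 ^ k :: real)" by (simp add: field_simps)
  ultimately show ?thesis by simp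
qed

lemma zc_summable: "summable zc" using sums_summable[OF zc_tail[of 0]] by simp

lemma dg_le: "dg w i \<le> 1" by (simp add: dg_def)

lemma summable_dgz: "summable (\<lambda>i. real (dg w i) * zc i)"
  by (rule summable_dig[OF zc_nn zc_summable]) (rule dg_le)

lemma Psi_range: "range Psi = achievement_set 1 zc"
proof (intro equalityI subsetI)
  fix y assume "y \<in> range Psi" then show "y \<in> achievement_set 1 zc"
    using dg_le unfolding ach_mem Psi_def by blast
next
  fix y assume "y \<in> achievement_set 1 zc"
  then obtain e where b: "\<And>i. e i \<le> 1" and y: "y = val zc e" by (auto simp: ach_mem)
  have "dg (\<lambda>i. e i = 1) = e" using b by (auto simp: fun_eq_iff dg_def le_Suc_eq)
  then show "y \<in> range Psi" using y unfolding Psi_def by (metis rangeI)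
qed

lemma Psi_split: "Psi w = Pn n w + (\<Sum>i. real (dg w (i + n)) * zc (i + n))"
  unfolding Psi_def val_def Pn_def
  by (subst suminf_split_initial_segment[where k=n]) (auto intro: summable_dgz)

lemma tail_bounds: "0 \<le> (\<Sum>i. real (dg w (i + n)) * zc (i + n)) \<and> (\<Sum>i. real (dg w (i + n)) * zc (i + n)) \<le> 1 / 3 ^ n"
proof -
  have s: "summable (\<lambda>i. real (dg w (i + n)) * zc (i + n))"
    using summable_ignore_initial_segment[OF summable_dgz[of w], where k=n] by simp
  have "(\<Sum>i. real (dg w (i + n)) * zc (i + n)) \<le> (\<Sum>i. zc (i + n))"
    by (rule suminf_le[OF _ s sums_summable[OF zc_tail]]) (auto simp: dg_def zc_nn)
  also have "\<dots> = 1 / 3 ^ n" by (rule sums_unique[OF zc_tail, symmetric])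
  finally show ?thesis using s by (auto intro!: suminf_nonneg simp: dg_def zc_nn)
qed

lemma Pn_Suc: "Pn (Suc n) w = real (dg w 0) * (2/3) + Pn n (\<lambda>i. w (Suc i)) / 3"
  unfolding Pn_def
  by (subst sum.lessThan_Suc_shift) (simp add: sum_divide_distrib zc_def dg_def)

lemma stage_char: "cantor_stage n = {Pn n w + t / 3 ^ n | w t. 0 \<le> t \<and> t \<le> 1}"
proof (induction n)
  case 0
  show ?case by (force simp: Pn_def)
next
  case (Suc n)
  show ?case
  proof (intro equalityI subsetI)
    fix y assume "y \<in> cantor_stage (Suc n)"
    then have "\<exists>v\<in>cantor_stage n. y = v / 3 \<or> y = 2/3 + v / 3" by auto
    then obtain v where v: "v \<in> cantor_stage n" and yy: "y = v / 3 \<or> y = 2/3 + v / 3" by blast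
    define b where "b = (y \<noteq> v / 3)"
    have y: "y = (if b then 2/3 else 0) + v / 3" using yy by (auto simp: b_def)
    obtain w t where t: "0 \<le> t" "t \<le> 1" and vw: "v = Pn n w + t / 3 ^ n" using v Suc by auto
    define w' where "w' i = (case i of 0 \<Rightarrow> b | Suc j \<Rightarrow> w j)" for i
    have "Pn (Suc n) w' = real (dg w' 0) * (2/3) + Pn n (\<lambda>i. w' (Suc i)) / 3" by (rule Pn_Suc)
    also have "(\<lambda>i. w' (Suc i)) = w" by (simp add: w'_def)
    also have "real (dg w' 0) * (2/3) = (if b then 2/3 else 0)" by (simp add: w'_def dg_def)
    finally have "Pn (Suc n) w' = (if b then 2/3 else 0) + Pn n w / 3" .
    then have "y = Pn (Suc n) w' + t / 3 ^ Suc n" using y vw by (simp add: add_divide_distrib)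
    then show "y \<in> {Pn (Suc n) w + t / 3 ^ Suc n | w t. 0 \<le> t \<and> t \<le> 1}" using t by blast
  next
    fix y assume "y \<in> {Pn (Suc n) w + t / 3 ^ Suc n | w t. 0 \<le> t \<and> t \<le> 1}"
    then obtain w t where t: "0 \<le> t" "t \<le> 1" and y: "y = Pn (Suc n) w + t / 3 ^ Suc n" by auto
    define v where "v = Pn n (\<lambda>i. w (Suc i)) + t / 3 ^ n"
    have vS: "v \<in> cantor_stage n" using Suc t unfolding v_def by blast
    have yv: "y = real (dg w 0) * (2/3) + v / 3" using y by (simp add: Pn_Suc v_def add_divide_distrib)
    show "y \<in> cantor_stage (Suc n)"
    proof (cases "w 0")
      case True
      then have "y = 2/3 + v/3" using yv by (simp add: dg_def)
      then show ?thesis using vS by auto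
    next
      case False
      then have "y = v/3" using yv by (simp add: dg_def)
      then show ?thesis using vS by auto
    qed
  qed
qed

lemma cantor_eq: "middle_thirds_cantor = range Psi"
proof (intro equalityI subsetI)
  fix y assume "y \<in> range Psi"
  then obtain w where y: "y = Psi w" by auto
  have "y \<in> cantor_stage n" for n
  proof -
    define t where "t = 3 ^ n * (\<Sum>i. real (dg w (i + n)) * zc (i + n))"
    have "0 \<le> t" "t \<le> 1" using tail_bounds[of w n] by (auto simp: t_def field_simps)
    moreover have "y = Pn n w + t / 3 ^ n" using Psi_split[of w n] y by (simp add: t_def)
    ultimately show ?thesis unfolding stage_char by blast
  qed
  then show "y \<in> middle_thirds_cantor" by (simp add: middle_thirds_cantor_def)
next
  fix y assume "y \<in> middle_thirds_cantor"
  then have yS: "\<And>n. y \<in> cantor_stage n" by (simp add: middle_thirds_cantor_def)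
  have cl: "closed (range Psi)" unfolding Psi_range by (rule ach_closed[OF zc_nn zc_summable])
  have "y \<in> closure (range Psi)"
    unfolding closure_approachable
  proof (intro allI impI)
    fix e :: real assume ep: "e > 0"
    obtain n where n: "(1/3::real) ^ n < e" using real_arch_pow_inv[OF ep, of "1/3"] by auto
    obtain w t where t: "0 \<le> t" "t \<le> 1" and y: "y = Pn n w + t / 3 ^ n" using yS[of n] unfolding stage_char by blast
    define w' where "w' i = (i < n \<and> w i)" for i
    have "Psi w' = (\<Sum>i<n. real (dg w' i) * zc i)"
      unfolding Psi_def val_def by (rule suminf_finite) (auto simp: w'_def dg_def)
    also have "\<dots> = Pn n w" unfolding Pn_def by (rule sum.cong) (auto simp: w'_def dg_def)
    finally have "dist (Psi w') y = t / 3 ^ n" using y t by (simp add: dist_real_def)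
    also have "\<dots> \<le> 1 / 3 ^ n" using t by (simp add: divide_right_mono)
    also have "\<dots> < e" using n by (simp add: power_one_over)
    finally show "\<exists>y'\<in>range Psi. dist y' y < e" by blast
  qed
  then show "y \<in> range Psi" using cl by (simp add: closure_closed)
qed

lemma Psi_mono: assumes "lexless w w'" shows "Psi w < Psi w'"
proof -
  obtain n where n: "\<forall>i<n. w i = w' i" "\<not> w n" "w' n" using assms unfolding lexless_def by blast
  define f where "f i = (real (dg w' i) - real (dg w i)) * zc i" for i
  have s1: "summable (\<lambda>i. real (dg w' i) * zc i)" by (rule summable_dgz)
  have s2: "summable (\<lambda>i. real (dg w i) * zc i)" by (rule summable_dgz)
  have diff: "Psi w' - Psi w = suminf f"
    unfolding Psi_def val_def f_def using suminf_diff[OF s1 s2] by (simp add: algebra_simps)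
  have sf: "summable f" unfolding f_def using summable_diff[OF s1 s2] by (simp add: algebra_simps)
  have "suminf f = (\<Sum>i. f (i + Suc n)) + sum f {..<Suc n}" by (rule suminf_split_initial_segment[OF sf])
  moreover have "sum f {..<Suc n} = zc n" using n by (simp add: f_def dg_def)
  moreover have "(\<Sum>i. f (i + Suc n)) \<ge> - (1 / 3 ^ Suc n)"
  proof -
    have sfs: "summable (\<lambda>i. f (i + Suc n))" using summable_ignore_initial_segment[OF sf, where k="Suc n"] by simp
    have "(\<Sum>i. - zc (i + Suc n)) \<le> (\<Sum>i. f (i + Suc n))"
      by (rule suminf_le[OF _ summable_minus[OF sums_summable[OF zc_tail]] sfs])
         (auto simp: f_def dg_def zc_nn)
    moreover have "(\<Sum>i. - zc (i + Suc n)) = - (1 / 3 ^ Suc n)"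
      using sums_unique[OF sums_minus[OF zc_tail[of "Suc n"]]] by simp
    ultimately show ?thesis by simp
  qed
  ultimately have "suminf f \<ge> zc n - 1 / 3 ^ Suc n" by simp
  moreover have "zc n - 1 / 3 ^ Suc n > 0" by (simp add: zc_def)
  ultimately show ?thesis using diff by simp
qed

lemma cantor_compact: "compact middle_thirds_cantor"
  unfolding cantor_eq Psi_range by (rule ach_compact[OF zc_nn zc_summable])

context ach begin

lemma caseB: assumes noint: "interior E = {}" shows "E homeomorphic middle_thirds_cantor"
proof -
  have cE: "compact E" by (rule ach_compact[OF _ sx]) (use nn in auto)
  have pE: "perfect_set E" by (rule ach_perfect[OF pos sx m1])
  interpret sk: splitK E
    by unfold_locales (use cE pE noint ach_nonempty[of x m] in \<open>auto simp: perfect_set_def\<close>)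
  define C where "C = middle_thirds_cantor"
  have CP: "C = range Psi" by (simp add: C_def cantor_eq)
  have Pinj: "inj Psi"
  proof (rule injI)
    fix w w' assume eq: "Psi w = Psi w'"
    show "w = w'"
    proof (rule ccontr)
      assume "w \<noteq> w'"
      then have "lexless w w' \<or> lexless w' w" by (rule lex_total)
      then show False using Psi_mono eq by force
    qed
  qed
  define h where "h = sk.Phi \<circ> inv Psi"
  have hPsi: "h (Psi w) = sk.Phi w" for w using Pinj by (simp add: h_def)
  have hmono: "h s < h t" if sC: "s \<in> C" and tC: "t \<in> C" and st: "s < t" for s t
  proof -
    obtain ws wt where ws: "s = Psi ws" and wt: "t = Psi wt" using sC tC CP by auto
    have "ws \<noteq> wt" using ws wt st by auto
    then have "lexless ws wt \<or> lexless wt ws" by (rule lex_total)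
    moreover have "\<not> lexless wt ws" using Psi_mono[of wt ws] ws wt st by auto
    ultimately have "lexless ws wt" by simp
    then show ?thesis using sk.Phi_mono ws wt hPsi by simp
  qed
  have himg: "h ` C = E"
  proof (intro equalityI subsetI)
    fix y assume "y \<in> h ` C"
    then obtain w where "y = h (Psi w)" using CP by auto
    then show "y \<in> E" using hPsi sk.Phi_K by simp
  next
    fix y assume "y \<in> E"
    then obtain w where "sk.Phi w = y" using sk.Phi_surj by blast
    then show "y \<in> h ` C" using hPsi CP by (metis rangeI image_eqI)
  qed
  have cont: "continuous_on C h"
    by (rule mono_cont[OF hmono]) (use himg cE compact_imp_closed in auto)
  have inj: "inj_on h C" using hmono by (metis inj_on_def linorder_neq_iff order_less_irrefl)
  obtain g where "homeomorphism C E h g"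
    using homeomorphism_compact[OF _ cont himg inj] cantor_compact C_def by blast
  then have "C homeomorphic E" unfolding homeomorphic_def by blast
  then show ?thesis using C_def homeomorphic_sym by blast
qed

end

theorem theorem11:
  fixes x :: "nat \<Rightarrow> real" and m :: nat
  assumes "\<And>n. x n > 0" and "summable x" and "m \<ge> 1"
  shows "(\<exists>C. is_cantor_set C \<and> achievement_set m x homeomorphic C)
       \<or> (\<exists>U. is_finite_union_of_intervals U \<and> achievement_set m x homeomorphic U)
       \<or> (\<exists>K. is_cantorval K \<and> achievement_set m x homeomorphic K)"
proof -
  interpret a: ach x m by unfold_locales (use assms in auto)
  show ?thesis
  proof (cases "is_finite_union_of_intervals (achievement_set m x)")
    case True
    then show ?thesis using homeomorphic_refl by blast
  next
    case nfu: False
    show ?thesis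
    proof (cases "interior (achievement_set m x) = {}")
      case True
      have "is_cantor_set middle_thirds_cantor" unfolding is_cantor_set_def by (rule homeomorphic_refl)
      then show ?thesis using a.caseB[OF True] by blast
    next
      case False
      have "is_cantorval (achievement_set m x)" unfolding is_cantorval_def
        using a.caseC[OF False nfu] by simp
      then show ?thesis using homeomorphic_refl by blast
    qed
  qed
qed

end
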